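(* Assume the setting described in the context. For every function $\phi:V\times\mathcal S_{T_0}\to\mathbb R$ of class $C^1$ in time and every continuous $F:E\times\mathcal S_{T_0}\to\mathbb R$, the functional $I_{\phi,F}:\mathcal M_*\to[0,+\infty]$... more precisely $I_{\phi,F}:\mathcal M_*\to\mathbb R\cup\{+\infty\}$ defined in the context is convex and lower semicontinuous.
   Context: Let $V$ be a finite set, $T_0>0$, $\mathcal S_{T_0}=\mathbb R/T_0\mathbb Z$. For $y,z\in V$, $r(y,z;\cdot)\ge0$ is measurable, $T_0$-periodic, $r(x,x;\cdot)=0$; $E$ is the set of $(y,z)$, $y\ne z$, with $r(y,z;t)>0$ for all $t>0$. Assume (A1) if $r(y,z;t)>0$ for some $t>0$ then for all $t>0$; (A2) $(V,E)$ strongly connected; (A3) $\max_E\sup_{t\in[0,T_0]}r<\infty$, $\min_E\inf_{t\in[0,T_0]}r>0$; (A4) the set of discontinuity points in $\mathcal S_{T_0}$ of the maps $t\mapsto r(y,z;t)$, $y,z\in V$, has Lebesgue measure zero. $\mathcal M_*=\mathcal M_{+,T_0}(V\times\mathcal S_{T_0})\times\mathcal M_+(E\times\mathcal S_{T_0})$ (nonnegative measures of total mass $T_0$, resp. finite nonnegative measures) with the weak topology. Set $r(y;t)=\sum_zr(y,z;t)$, $r^F(y,z;t)=r(y,z;t)e^{F(y,z;t)}$, $r^F(y;t)=\sum_zr^F(y,z;t)$. For a finite measure $Q$ on $E\times\mathcal S_{T_0}$, $\mathrm{div}\,Q(\phi)=\sum_y\int\phi(y,s)[\sum_zQ(y,z,ds)-\sum_zQ(z,y,ds)]$.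 Define $\hat I_{\phi,F}(\mu,Q)=-\mu(\partial_t\phi)+\mathrm{div}\,Q(\phi)+Q(F)-\mu(r^F-r)$, where $\mu(h)=\sum_y\int h(y,t)\mu(y,dt)$ and $Q(F)=\sum_{(y,z)}\int F(y,z,t)Q(y,z,dt)$; and $I_{\phi,F}(\mu,Q)=\hat I_{\phi,F}(\mu,Q)$ if $\mu=\mu_tdt$ with $\mu_t(V)=1$ for a.e. $t$, and $I_{\phi,F}(\mu,Q)=+\infty$ otherwise. *)

theory Defs
  imports "HOL-Probability.Probability"
begin

text \<open>The time circle S_T0 = R/T0Z is represented by the real line with
  T0-periodic functions; measures on S_T0 are represented by finite Borel measures on the
  real line concentrated on the fundamental domain [0,T0). Test functions for the weak
  topology are continuous T0-periodic functions (= continuous functions on the circle).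
  The finite vertex set V is the finite type 'v (V = UNIV). A measure on V x S_T0 is a
  family mu :: 'v => real measure (mu y = mu(y,dt)); a measure on E x S_T0 is a family
  Q :: 'v * 'v => real measure with Q e the zero measure for e not in E.\<close>

definition periodic_fun :: "real \<Rightarrow> (real \<Rightarrow> 'b) \<Rightarrow> bool" where
  "periodic_fun T f \<longleftrightarrow> (\<forall>t. f (t + T) = f t)"

definition circ_meas :: "real \<Rightarrow> real measure \<Rightarrow> bool" where
  "circ_meas T m \<longleftrightarrow> sets m = sets borel \<and> finite_measure m \<and> emeasure m (- {0..<T}) = 0"

definition edges :: "('v \<Rightarrow> 'v \<Rightarrow> real \<Rightarrow> real) \<Rightarrow> ('v \<times> 'v) set" where
  "edges r = {(y, z). y \<noteq> z \<and> (\<forall>t>0. r y z t > 0)}"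

definition Mstar :: "real \<Rightarrow> ('v \<times> 'v) set \<Rightarrow>
    (('v::finite \<Rightarrow> real measure) \<times> ('v \<times> 'v \<Rightarrow> real measure)) set" where
  "Mstar T E = {(\<mu>, Q).
      (\<forall>y. circ_meas T (\<mu> y)) \<and> (\<Sum>y\<in>UNIV. measure (\<mu> y) UNIV) = T \<and>
      (\<forall>e. circ_meas T (Q e)) \<and> (\<forall>e. e \<notin> E \<longrightarrow> Q e = null_measure borel)}"

text \<open>Weak topology on M_*: generated by the maps p |-> integral of continuous
  (periodic) test functions against each component; this is the product of the weak
  topologies on the two factors (V and E are finite and discrete).\<close>
definition weak_top :: "real \<Rightarrow> ('v \<times> 'v) set \<Rightarrow>
    (('v::finite \<Rightarrow> real measure) \<times> ('v \<times> 'v \<Rightarrow> real measure)) topology" where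
  "weak_top T E = topology_generated_by
     ({ {p \<in> Mstar T E. (\<integral>t. (f::real\<Rightarrow>real) t \<partial>(fst p y)) \<in> (U::real set)} | y f U.
          open U \<and> continuous_on UNIV f \<and> periodic_fun T f } \<union>
      { {p \<in> Mstar T E. (\<integral>t. (f::real\<Rightarrow>real) t \<partial>(snd p e)) \<in> (U::real set)} | e f U.
          open U \<and> continuous_on UNIV f \<and> periodic_fun T f })"

definition convex_comb_meas :: "real \<Rightarrow> real measure \<Rightarrow> real measure \<Rightarrow> real measure \<Rightarrow> bool" where
  "convex_comb_meas lam m1 m2 w \<longleftrightarrow> sets w = sets borel \<and>
     (\<forall>A\<in>sets borel. emeasure w A = ennreal lam * emeasure m1 A + ennreal (1 - lam) * emeasure m2 A)"

definition convex_comb_pair :: "real \<Rightarrow> (('v \<Rightarrow> real measure) \<times> ('w \<Rightarrow> real measure))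
    \<Rightarrow> (('v \<Rightarrow> real measure) \<times> ('w \<Rightarrow> real measure))
    \<Rightarrow> (('v \<Rightarrow> real measure) \<times> ('w \<Rightarrow> real measure)) \<Rightarrow> bool" where
  "convex_comb_pair lam p q w \<longleftrightarrow>
     (\<forall>y. convex_comb_meas lam (fst p y) (fst q y) (fst w y)) \<and>
     (\<forall>e. convex_comb_meas lam (snd p e) (snd q e) (snd w e))"

text \<open>hat I_{phi,F}(mu,Q) = -mu(d_t phi) + div Q(phi) + Q(F) - mu(r^F - r).\<close>
definition Ihat :: "real \<Rightarrow> ('v::finite \<Rightarrow> 'v \<Rightarrow> real \<Rightarrow> real) \<Rightarrow> ('v \<Rightarrow> real \<Rightarrow> real)
    \<Rightarrow> ('v \<Rightarrow> 'v \<Rightarrow> real \<Rightarrow> real) \<Rightarrow> ('v \<Rightarrow> real measure) \<Rightarrow> ('v \<times> 'v \<Rightarrow> real measure) \<Rightarrow> real" where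
  "Ihat T r \<phi> F \<mu> Q =
     - (\<Sum>y\<in>UNIV. \<integral>t. deriv (\<phi> y) t \<partial>(\<mu> y))
     + (\<Sum>y\<in>UNIV. \<Sum>z\<in>UNIV. (\<integral>s. \<phi> y s \<partial>(Q (y, z))) - (\<integral>s. \<phi> y s \<partial>(Q (z, y))))
     + (\<Sum>(y, z)\<in>edges r. \<integral>t. F y z t \<partial>(Q (y, z)))
     - (\<Sum>y\<in>UNIV. \<integral>t. (\<Sum>z\<in>UNIV. r y z t * exp (F y z t)) - (\<Sum>z\<in>UNIV. r y z t) \<partial>(\<mu> y))"

definition time_abs_cont :: "real \<Rightarrow> ('v::finite \<Rightarrow> real measure) \<Rightarrow> bool" where
  "time_abs_cont T \<mu> \<longleftrightarrow> (\<exists>m :: 'v \<Rightarrow> real \<Rightarrow> ennreal.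
      (\<forall>y. m y \<in> borel_measurable borel \<and> \<mu> y = density lborel (m y)) \<and>
      (AE t in lborel. 0 \<le> t \<and> t < T \<longrightarrow> (\<Sum>y\<in>UNIV. m y t) = 1))"

definition Ifun :: "real \<Rightarrow> ('v::finite \<Rightarrow> 'v \<Rightarrow> real \<Rightarrow> real) \<Rightarrow> ('v \<Rightarrow> real \<Rightarrow> real)
    \<Rightarrow> ('v \<Rightarrow> 'v \<Rightarrow> real \<Rightarrow> real) \<Rightarrow> ('v \<Rightarrow> real measure) \<times> ('v \<times> 'v \<Rightarrow> real measure) \<Rightarrow> ereal" where
  "Ifun T r \<phi> F p =
     (if time_abs_cont T (fst p) then ereal (Ihat T r \<phi> F (fst p) (snd p)) else \<infinity>)"

end

theory Submission
  imports Defs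
begin

lemma periodic_nat: "periodic_fun T f \<Longrightarrow> f (t + real n * T) = f t"
proof (induction n arbitrary: t)
  case 0 then show ?case by simp
next
  case (Suc n)
  have "f (t + real (Suc n) * T) = f ((t + real n * T) + T)" by (simp add: algebra_simps)
  also have "\<dots> = f (t + real n * T)" using Suc.prems unfolding periodic_fun_def by blast
  finally show ?case using Suc by simp
qed

lemma periodic_int: "periodic_fun T f \<Longrightarrow> f (t + real_of_int k * T) = f t"
proof (cases "k \<ge> 0")
  case True
  assume p: "periodic_fun T f"
  from True obtain n where "k = int n" by (metis nonneg_eq_int)
  then show ?thesis using periodic_nat[OF p] by simp
next
  case False
  assume p: "periodic_fun T f"
  from False obtain n where n: "k = - int n" by (metis le_cases neg_eq_iff_add_eq_0 nonneg_eq_int add.inverse_inverse neg_0_le_iff_le)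
  have "f t = f ((t + real_of_int k * T) + real n * T)" using n by simp
  also have "\<dots> = f (t + real_of_int k * T)" using periodic_nat[OF p] by blast
  finally show ?thesis by simp
qed

lemma periodic_reduce:
  assumes "(T::real) > 0" shows "\<exists>k::int. t + real_of_int k * T \<in> {0..<T}"
proof -
  define k where "k = - \<lfloor>t / T\<rfloor>"
  have a: "real_of_int \<lfloor>t/T\<rfloor> \<le> t / T" "t / T < real_of_int \<lfloor>t/T\<rfloor> + 1" by linarith+
  have "real_of_int \<lfloor>t/T\<rfloor> * T \<le> t" using a(1) assms by (simp add: le_divide_eq)
  moreover have "t < (real_of_int \<lfloor>t/T\<rfloor> + 1) * T" using a(2) assms by (metis pos_divide_less_eq)
  ultimately have "t + real_of_int k * T \<in> {0..<T}" unfolding k_def by (auto simp: algebra_simps)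
  then show ?thesis by blast
qed

lemma periodic_bound_ext:
  assumes "T > 0" "periodic_fun T f" "\<And>t. t \<in> {0..<T} \<Longrightarrow> P (f t)"
  shows "P (f t)"
proof -
  obtain k :: int where k: "t + real_of_int k * T \<in> {0..<T}" using periodic_reduce[OF assms(1)] by blast
  have "f (t + real_of_int k * T) = f t" using periodic_int[OF assms(2)] .
  with assms(3)[OF k] show ?thesis by simp
qed

lemma periodic_cont_bounded:
  assumes "(T::real) > 0" "periodic_fun T f" "continuous_on UNIV (f :: real \<Rightarrow> real)"
  shows "\<exists>B. \<forall>t. \<bar>f t\<bar> \<le> B"
proof -
  have "compact (f ` {0..T})" by (rule compact_continuous_image) (auto intro: continuous_on_subset[OF assms(3)])
  then obtain B where B: "\<forall>x\<in>f ` {0..T}. norm x \<le> B" using compact_imp_bounded bounded_iff by metis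
  have "\<bar>f t\<bar> \<le> B" for t
    by (rule periodic_bound_ext[OF assms(1,2)]) (use B in auto)
  then show ?thesis by blast
qed

lemma meas_borel_cong:
  assumes "sets m = sets borel" "f \<in> borel_measurable borel" shows "f \<in> borel_measurable m"
  using assms(2) measurable_cong_sets[OF assms(1) refl] by blast

lemma nn_lincomb:
  fixes w m1 m2 :: "real measure" and a b :: ennreal
  assumes sw: "sets w = sets borel" and s1: "sets m1 = sets borel" and s2: "sets m2 = sets borel"
    and em: "\<And>A. A \<in> sets borel \<Longrightarrow> emeasure w A = a * emeasure m1 A + b * emeasure m2 A"
    and u: "u \<in> borel_measurable borel"
  shows "(\<integral>\<^sup>+ x. u x \<partial>w) = a * (\<integral>\<^sup>+ x. u x \<partial>m1) + b * (\<integral>\<^sup>+ x. u x \<partial>m2)"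
  using u
proof (induction rule: borel_measurable_induct)
  case (cong f g)
  then have "f = g" by auto
  then show ?case using cong by simp
next
  case (set A)
  then show ?case using sw s1 s2 em by simp
next
  case (mult u c)
  have "(\<integral>\<^sup>+ x. c * u x \<partial>w) = c * (\<integral>\<^sup>+ x. u x \<partial>w)"
    by (rule nn_integral_cmult[OF meas_borel_cong[OF sw mult(2)]])
  moreover have "(\<integral>\<^sup>+ x. c * u x \<partial>m1) = c * (\<integral>\<^sup>+ x. u x \<partial>m1)"
    by (rule nn_integral_cmult[OF meas_borel_cong[OF s1 mult(2)]])
  moreover have "(\<integral>\<^sup>+ x. c * u x \<partial>m2) = c * (\<integral>\<^sup>+ x. u x \<partial>m2)"
    by (rule nn_integral_cmult[OF meas_borel_cong[OF s2 mult(2)]])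
  ultimately show ?case using mult(4) by (simp only: distrib_left mult.left_commute)
next
  case (add u v)
  have "(\<integral>\<^sup>+ x. v x + u x \<partial>w) = (\<integral>\<^sup>+ x. v x \<partial>w) + (\<integral>\<^sup>+ x. u x \<partial>w)"
    by (intro nn_integral_add meas_borel_cong[OF sw]) (use add in auto)
  moreover have "(\<integral>\<^sup>+ x. v x + u x \<partial>m1) = (\<integral>\<^sup>+ x. v x \<partial>m1) + (\<integral>\<^sup>+ x. u x \<partial>m1)"
    by (intro nn_integral_add meas_borel_cong[OF s1]) (use add in auto)
  moreover have "(\<integral>\<^sup>+ x. v x + u x \<partial>m2) = (\<integral>\<^sup>+ x. v x \<partial>m2) + (\<integral>\<^sup>+ x. u x \<partial>m2)"
    by (intro nn_integral_add meas_borel_cong[OF s2]) (use add in auto)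
  ultimately show ?case using add by (simp only: distrib_left add_ac)
next
  case (seq U)
  have mw: "\<And>i. U i \<in> borel_measurable w" by (rule meas_borel_cong[OF sw seq(1)])
  have m1: "\<And>i. U i \<in> borel_measurable m1" by (rule meas_borel_cong[OF s1 seq(1)])
  have m2: "\<And>i. U i \<in> borel_measurable m2" by (rule meas_borel_cong[OF s2 seq(1)])
  have e: "\<And>M. (\<And>i. U i \<in> borel_measurable M) \<Longrightarrow> (\<integral>\<^sup>+ x. (SUP i. U i) x \<partial>M) = (SUP i. \<integral>\<^sup>+ x. U i x \<partial>M)"
    unfolding SUP_apply by (rule nn_integral_monotone_convergence_SUP) (use seq in auto)
  have i1: "incseq (\<lambda>i. a * \<integral>\<^sup>+ x. U i x \<partial>m1)"
    using seq by (auto simp: incseq_def le_fun_def intro!: mult_left_mono nn_integral_mono)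
  have i2: "incseq (\<lambda>i. b * \<integral>\<^sup>+ x. U i x \<partial>m2)"
    using seq by (auto simp: incseq_def le_fun_def intro!: mult_left_mono nn_integral_mono)
  have "(\<integral>\<^sup>+ x. (SUP i. U i) x \<partial>w) = (SUP i. a * (\<integral>\<^sup>+ x. U i x \<partial>m1) + b * (\<integral>\<^sup>+ x. U i x \<partial>m2))"
    using e[OF mw] seq by simp
  also have "\<dots> = (SUP i. a * (\<integral>\<^sup>+ x. U i x \<partial>m1)) + (SUP i. b * (\<integral>\<^sup>+ x. U i x \<partial>m2))"
    by (rule ennreal_SUP_add[OF i1 i2])
  also have "\<dots> = a * (\<integral>\<^sup>+ x. (SUP i. U i) x \<partial>m1) + b * (\<integral>\<^sup>+ x. (SUP i. U i) x \<partial>m2)"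
    using e[OF m1] e[OF m2] by (simp add: SUP_mult_left_ennreal)
  finally show ?case .
qed

lemma conv_integral:
  fixes f :: "real \<Rightarrow> real"
  assumes cc: "convex_comb_meas lam m1 m2 w" and lam: "0 \<le> lam" "lam \<le> 1"
    and s1: "sets m1 = sets borel" and s2: "sets m2 = sets borel"
    and f: "f \<in> borel_measurable borel" and i1: "integrable m1 f" and i2: "integrable m2 f"
  shows "integrable w f \<and> integral\<^sup>L w f = lam * integral\<^sup>L m1 f + (1 - lam) * integral\<^sup>L m2 f"
proof -
  have sw: "sets w = sets borel" using cc unfolding convex_comb_meas_def by auto
  have em: "\<And>A. A \<in> sets borel \<Longrightarrow> emeasure w A = ennreal lam * emeasure m1 A + ennreal (1 - lam) * emeasure m2 A"
    using cc unfolding convex_comb_meas_def by auto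
  note L = nn_lincomb[OF sw s1 s2 em]
  have fin: "\<And>M. integrable M f \<Longrightarrow> (\<integral>\<^sup>+ x. ennreal (norm (f x)) \<partial>M) < \<infinity>"
    using integrable_iff_bounded by blast
  have "(\<integral>\<^sup>+ x. ennreal (norm (f x)) \<partial>w) < \<infinity>"
    using L[of "\<lambda>x. ennreal (norm (f x))"] f fin[OF i1] fin[OF i2]
    by (simp add: ennreal_mult_less_top ennreal_less_top)
  then have iw: "integrable w f" using f meas_borel_cong[OF sw] integrable_iff_bounded by blast
  have pos: "\<And>M. integrable M f \<Longrightarrow> (\<integral>\<^sup>+ x. ennreal (f x) \<partial>M) < \<infinity>"
  proof -
    fix M assume "integrable M f"
    then have "(\<integral>\<^sup>+ x. ennreal (norm (f x)) \<partial>M) < \<infinity>" by (rule fin)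
    moreover have "(\<integral>\<^sup>+ x. ennreal (f x) \<partial>M) \<le> (\<integral>\<^sup>+ x. ennreal (norm (f x)) \<partial>M)"
      by (intro nn_integral_mono) (auto intro: ennreal_leI)
    ultimately show "(\<integral>\<^sup>+ x. ennreal (f x) \<partial>M) < \<infinity>" by (meson le_less_trans)
  qed
  have neg: "\<And>M. integrable M f \<Longrightarrow> (\<integral>\<^sup>+ x. ennreal (- f x) \<partial>M) < \<infinity>"
  proof -
    fix M assume "integrable M f"
    then have "(\<integral>\<^sup>+ x. ennreal (norm (f x)) \<partial>M) < \<infinity>" by (rule fin)
    moreover have "(\<integral>\<^sup>+ x. ennreal (- f x) \<partial>M) \<le> (\<integral>\<^sup>+ x. ennreal (norm (f x)) \<partial>M)"
      by (intro nn_integral_mono) (auto intro: ennreal_leI)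
    ultimately show "(\<integral>\<^sup>+ x. ennreal (- f x) \<partial>M) < \<infinity>" by (meson le_less_trans)
  qed
  have e2r: "\<And>X Y. X < \<infinity> \<Longrightarrow> Y < \<infinity> \<Longrightarrow> enn2real (ennreal lam * X + ennreal (1 - lam) * Y) = lam * enn2real X + (1 - lam) * enn2real Y"
    using lam by (simp add: enn2real_plus enn2real_mult ennreal_mult_less_top ennreal_less_top)
  have P: "enn2real (\<integral>\<^sup>+ x. ennreal (f x) \<partial>w) = lam * enn2real (\<integral>\<^sup>+ x. ennreal (f x) \<partial>m1) + (1 - lam) * enn2real (\<integral>\<^sup>+ x. ennreal (f x) \<partial>m2)"
    using L[of "\<lambda>x. ennreal (f x)"] f e2r pos[OF i1] pos[OF i2] by simp
  have N: "enn2real (\<integral>\<^sup>+ x. ennreal (- f x) \<partial>w) = lam * enn2real (\<integral>\<^sup>+ x. ennreal (- f x) \<partial>m1) + (1 - lam) * enn2real (\<integral>\<^sup>+ x. ennreal (- f x) \<partial>m2)"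
    using L[of "\<lambda>x. ennreal (- f x)"] f e2r neg[OF i1] neg[OF i2] by simp
  show ?thesis
  proof
    show "integrable w f" by (rule iw)
    have "integral\<^sup>L w f = enn2real (\<integral>\<^sup>+ x. ennreal (f x) \<partial>w) - enn2real (\<integral>\<^sup>+ x. ennreal (- f x) \<partial>w)"
      by (rule real_lebesgue_integral_def[OF iw])
    also have "\<dots> = lam * (enn2real (\<integral>\<^sup>+ x. ennreal (f x) \<partial>m1) - enn2real (\<integral>\<^sup>+ x. ennreal (- f x) \<partial>m1))
       + (1 - lam) * (enn2real (\<integral>\<^sup>+ x. ennreal (f x) \<partial>m2) - enn2real (\<integral>\<^sup>+ x. ennreal (- f x) \<partial>m2))"
      unfolding P N by (simp add: right_diff_distrib)
    finally show "integral\<^sup>L w f = lam * integral\<^sup>L m1 f + (1 - lam) * integral\<^sup>L m2 f"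
      by (simp only: real_lebesgue_integral_def[OF i1] real_lebesgue_integral_def[OF i2])
  qed
qed

definition lamT :: "real \<Rightarrow> real measure" where
  "lamT T = density lborel (indicator {0..<T})"

lemma sets_lamT[simp]: "sets (lamT T) = sets borel"
  by (simp add: lamT_def)

lemma emeasure_lamT:
  assumes "A \<in> sets borel" shows "emeasure (lamT T) A = emeasure lborel (A \<inter> {0..<T})"
proof -
  have "emeasure (lamT T) A = (\<integral>\<^sup>+ x. indicator {0..<T} x * indicator A x \<partial>lborel)"
    unfolding lamT_def using assms by (simp add: emeasure_density)
  also have "\<dots> = (\<integral>\<^sup>+ x. indicator (A \<inter> {0..<T}) x \<partial>lborel)"
    by (intro nn_integral_cong) (simp split: split_indicator)
  also have "\<dots> = emeasure lborel (A \<inter> {0..<T})"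
    using assms by simp
  finally show ?thesis .
qed

lemma circ_lamT: assumes "T > 0" shows "circ_meas T (lamT T)"
proof -
  have "emeasure (lamT T) UNIV = ennreal T" using emeasure_lamT[of UNIV T] assms by simp
  then have "finite_measure (lamT T)"
    by (intro finite_measureI) (simp add: lamT_def)
  moreover have "emeasure (lamT T) (- {0..<T}) = 0"
    using emeasure_lamT[of "- {0..<T}" T] by simp
  ultimately show ?thesis unfolding circ_meas_def by simp
qed

lemma measure_lamT_UNIV: "T > 0 \<Longrightarrow> measure (lamT T) UNIV = T"
  using emeasure_lamT[of UNIV T] by (simp add: measure_def)

lemma circ_sets: "circ_meas T m \<Longrightarrow> sets m = sets borel"
  by (simp add: circ_meas_def)

lemma circ_space: "circ_meas T m \<Longrightarrow> space m = UNIV"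
  by (metis circ_sets sets_eq_imp_space_eq space_borel)

lemma circ_fin: "circ_meas T m \<Longrightarrow> finite_measure m"
  by (simp add: circ_meas_def)

lemma circ_AE: assumes "circ_meas T m" shows "AE t in m. t \<in> {0..<T}"
proof (rule AE_I')
  show "- {0..<T} \<in> null_sets m" using assms unfolding circ_meas_def by (simp add: null_sets_def)
  show "{x \<in> space m. x \<notin> {0..<T}} \<subseteq> - {0..<T}" by auto
qed

lemma circ_null: assumes "circ_meas T m" "A \<inter> {0..<T} = {}" "A \<in> sets borel"
  shows "emeasure m A = 0"
proof -
  have "emeasure m A \<le> emeasure m (- {0..<T})"
    using assms by (intro emeasure_mono) (auto simp: circ_sets)
  then show ?thesis using assms(1) unfolding circ_meas_def by simp
qed

lemma integrable_circ:
  fixes f :: "real \<Rightarrow> real"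
  assumes c: "circ_meas T m" and f: "f \<in> borel_measurable borel" and B: "\<And>t. t \<in> {0..<T} \<Longrightarrow> \<bar>f t\<bar> \<le> B"
  shows "integrable m f"
proof -
  interpret finite_measure m using circ_fin[OF c] .
  show ?thesis
  proof (rule integrable_const_bound[where B=B])
    show "AE x in m. norm (f x) \<le> B" using circ_AE[OF c] by eventually_elim (use B in auto)
    show "f \<in> borel_measurable m" using meas_borel_cong[OF circ_sets[OF c] f] .
  qed
qed

lemma integrable_circ_glob:
  fixes f :: "real \<Rightarrow> real"
  assumes c: "circ_meas T m" and f: "f \<in> borel_measurable borel" and B: "\<And>t. \<bar>f t\<bar> \<le> B"
  shows "integrable m f"
  using integrable_circ[OF c f] B by blast

lemma lamT_dens: "lamT T = density lborel (\<lambda>x. ennreal (indicator {0..<T} x))"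
  unfolding lamT_def by (simp add: ennreal_indicator)

lemma tac_real:
  fixes \<mu> :: "'v::finite \<Rightarrow> real measure"
  assumes c: "\<And>y. circ_meas T (\<mu> y)" and tac: "time_abs_cont T \<mu>"
  shows "\<exists>d. (\<forall>y. d y \<in> borel_measurable borel \<and> (\<forall>t. 0 \<le> d y t) \<and> \<mu> y = density lborel (\<lambda>t. ennreal (d y t)))
       \<and> (AE t in lborel. (\<Sum>y\<in>UNIV. d y t) = indicator {0..<T} t)"
proof -
  obtain m where m: "\<And>y. m y \<in> borel_measurable borel" "\<And>y. \<mu> y = density lborel (m y)"
    and ae1: "AE t in lborel. 0 \<le> t \<and> t < T \<longrightarrow> (\<Sum>y\<in>UNIV. m y t) = 1"
    using tac unfolding time_abs_cont_def by blast
  have ae0y: "AE t in lborel. t \<notin> {0..<T} \<longrightarrow> m y t = 0" for y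
  proof -
    have "emeasure (\<mu> y) (- {0..<T}) = 0" using c[of y] unfolding circ_meas_def by simp
    then have "(\<integral>\<^sup>+ t. m y t * indicator (- {0..<T}) t \<partial>lborel) = 0"
      using m by (simp add: emeasure_density)
    then have "AE t in lborel. m y t * indicator (- {0..<T}) t = 0"
      using m by (subst (asm) nn_integral_0_iff_AE) auto
    then show ?thesis by eventually_elim (auto split: split_indicator)
  qed
  have ae0: "AE t in lborel. \<forall>y\<in>UNIV. t \<notin> {0..<T} \<longrightarrow> m y t = 0"
    by (rule AE_finite_allI) (use ae0y in auto)
  define d where "d y t = enn2real (m y t)" for y t
  have fin: "AE t in lborel. \<forall>y. m y t = ennreal (d y t)"
    using ae0 ae1
  proof eventually_elim
    case (elim t)
    show ?case
    proof
      fix y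
      have "m y t < top"
      proof (cases "t \<in> {0..<T}")
        case True
        then have "(\<Sum>y\<in>UNIV. m y t) = 1" using elim by auto
        moreover have "m y t \<le> (\<Sum>y\<in>UNIV. m y t)" by (rule member_le_sum) auto
        ultimately show ?thesis by (metis ennreal_one_less_top le_less_trans)
      next
        case False then show ?thesis using elim by auto
      qed
      then show "m y t = ennreal (d y t)" unfolding d_def by (simp add: less_top)
    qed
  qed
  have dm: "d y \<in> borel_measurable borel" for y unfolding d_def using m(1) by measurable
  have eq: "\<mu> y = density lborel (\<lambda>t. ennreal (d y t))" for y
  proof -
    have "density lborel (m y) = density lborel (\<lambda>t. ennreal (d y t))"
      by (rule density_cong) (use m(1) dm fin in \<open>auto elim: eventually_mono\<close>)
    then show ?thesis using m(2) by simp
  qed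
  have sum: "AE t in lborel. (\<Sum>y\<in>UNIV. d y t) = indicator {0..<T} t"
    using ae0 ae1
  proof eventually_elim
    case (elim t)
    show ?case
    proof (cases "t \<in> {0..<T}")
      case True
      then have s1: "(\<Sum>y\<in>UNIV. m y t) = 1" using elim by auto
      have lt: "m y t < top" for y
      proof -
        have "m y t \<le> (\<Sum>y\<in>UNIV. m y t)" by (rule member_le_sum) auto
        then show ?thesis using s1 by (metis ennreal_one_less_top le_less_trans)
      qed
      have "(\<Sum>y\<in>UNIV. d y t) = enn2real (\<Sum>y\<in>UNIV. m y t)"
        unfolding d_def by (subst enn2real_sum) (use lt in auto)
      also have "\<dots> = 1" using s1 by simp
      finally show ?thesis using True by simp
    next
      case False
      then have "\<And>y. m y t = 0" using elim by auto
      then show ?thesis using False by (simp add: d_def)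
    qed
  qed
  show ?thesis
    by (rule exI[of _ d]) (use dm eq sum in \<open>auto simp: d_def\<close>)
qed


lemma tac_intro:
  fixes \<mu> :: "'v::finite \<Rightarrow> real measure"
  assumes d: "\<And>y. d y \<in> borel_measurable borel" "\<And>y t. 0 \<le> d y t"
    "\<And>y. \<mu> y = density lborel (\<lambda>t. ennreal (d y t))"
    and ae: "AE t in lborel. (\<Sum>y\<in>UNIV. d y t) = indicator {0..<T} t"
  shows "time_abs_cont T \<mu>"
  unfolding time_abs_cont_def
proof (intro exI[of _ "\<lambda>y t. ennreal (d y t)"] conjI allI)
  fix y show "(\<lambda>t. ennreal (d y t)) \<in> borel_measurable borel" using d(1) by measurable
  show "\<mu> y = density lborel (\<lambda>t. ennreal (d y t))" by (rule d(3))
next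
  show "AE t in lborel. 0 \<le> t \<and> t < T \<longrightarrow> (\<Sum>y\<in>UNIV. ennreal (d y t)) = 1"
    using ae by eventually_elim (use d(2) in \<open>auto simp: sum_nonneg\<close>)
qed


lemma integral_dens:
  fixes f :: "real \<Rightarrow> real"
  assumes "d \<in> borel_measurable borel" "\<And>t. 0 \<le> d t" "f \<in> borel_measurable borel"
  shows "integral\<^sup>L (density lborel (\<lambda>t. ennreal (d t))) f = (\<integral>t. d t * f t \<partial>lborel)"
  using integral_density[of f lborel d] assms by simp


lemma integrable_dens:
  fixes f :: "real \<Rightarrow> real"
  assumes "d \<in> borel_measurable borel" "\<And>t. 0 \<le> d t" "f \<in> borel_measurable borel"
    "integrable (density lborel (\<lambda>t. ennreal (d t))) f"
  shows "integrable lborel (\<lambda>t. d t * f t)"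
  using integrable_density[of f lborel d] assms by simp


lemma Lsum_dens:
  fixes \<mu> :: "'v::finite \<Rightarrow> real measure" and f :: "real \<Rightarrow> real"
  assumes c: "\<And>y. circ_meas T (\<mu> y)"
    and d: "\<And>y. d y \<in> borel_measurable borel" "\<And>y t. 0 \<le> d y t"
    "\<And>y. \<mu> y = density lborel (\<lambda>t. ennreal (d y t))"
    and ae: "AE t in lborel. (\<Sum>y\<in>UNIV. d y t) = indicator {0..<T} t"
    and f: "f \<in> borel_measurable borel" and B: "\<And>t. \<bar>f t\<bar> \<le> B"
  shows "(\<Sum>y\<in>UNIV. integral\<^sup>L (\<mu> y) f) = integral\<^sup>L (lamT T) f"
proof -
  have int: "integrable lborel (\<lambda>t. d y t * f t)" for y
    using integrable_dens[OF d(1,2) f] integrable_circ_glob[OF c f B] d(3) by metis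
  have "(\<Sum>y\<in>UNIV. integral\<^sup>L (\<mu> y) f) = (\<Sum>y\<in>UNIV. \<integral>t. d y t * f t \<partial>lborel)"
    using integral_dens[OF d(1,2) f] d(3) by simp
  also have "\<dots> = (\<integral>t. (\<Sum>y\<in>UNIV. d y t * f t) \<partial>lborel)"
    by (rule sym, rule Bochner_Integration.integral_sum) (use int in auto)
  also have "\<dots> = (\<integral>t. indicator {0..<T} t * f t \<partial>lborel)"
    by (rule integral_cong_AE) (use ae f d(1) in \<open>auto simp: sum_distrib_right[symmetric] elim: eventually_mono\<close>)
  also have "\<dots> = integral\<^sup>L (lamT T) f"
    unfolding lamT_dens by (rule integral_dens[symmetric]) (use f in auto)
  finally show ?thesis .
qed


lemma dens_le_lamT:
  fixes \<mu> :: "'v::finite \<Rightarrow> real measure" and u :: "real \<Rightarrow> real"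
  assumes c: "\<And>y. circ_meas T (\<mu> y)" "T > 0"
    and d: "\<And>y. d y \<in> borel_measurable borel" "\<And>y t. 0 \<le> d y t"
    "\<And>y. \<mu> y = density lborel (\<lambda>t. ennreal (d y t))"
    and ae: "AE t in lborel. (\<Sum>y\<in>UNIV. d y t) = indicator {0..<T} t"
    and u: "u \<in> borel_measurable borel" "\<And>t. 0 \<le> u t" "\<And>t. u t \<le> B"
  shows "integral\<^sup>L (\<mu> y) u \<le> integral\<^sup>L (lamT T) u"
proof -
  have B: "\<And>t. \<bar>u t\<bar> \<le> B" using u by (metis abs_of_nonneg)
  have int: "integrable lborel (\<lambda>t. d y t * u t)"
    using integrable_dens[OF d(1,2) u(1)] integrable_circ_glob[OF c(1) u(1) B] d(3) by metis
  have int2: "integrable lborel (\<lambda>t. indicator {0..<T} t * u t)"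
    using integrable_dens[of "indicator {0..<T}" u] integrable_circ_glob[OF circ_lamT[OF c(2)] u(1) B] u(1)
    unfolding lamT_dens by auto
  have "integral\<^sup>L (\<mu> y) u = (\<integral>t. d y t * u t \<partial>lborel)"
    using integral_dens[OF d(1,2) u(1)] d(3) by simp
  also have "\<dots> \<le> (\<integral>t. indicator {0..<T} t * u t \<partial>lborel)"
  proof (rule integral_mono_AE[OF int int2])
    show "AE t in lborel. d y t * u t \<le> indicator {0..<T} t * u t"
      using ae
    proof eventually_elim
      case (elim t)
      have "d y t \<le> (\<Sum>y\<in>UNIV. d y t)" by (rule member_le_sum) (use d(2) in auto)
      then show ?case using elim u(2)[of t] by (simp add: mult_right_mono)
    qed
  qed
  also have "\<dots> = integral\<^sup>L (lamT T) u"
    unfolding lamT_dens by (rule integral_dens[symmetric]) (use u in auto)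
  finally show ?thesis .
qed

definition Sa :: "real \<Rightarrow> real \<Rightarrow> real set" where
  "Sa T a = {s. \<exists>k::int. real_of_int k * T \<le> s \<and> s \<le> real_of_int k * T + a}"

definition fc :: "real \<Rightarrow> real \<Rightarrow> nat \<Rightarrow> real \<Rightarrow> real" where
  "fc T a n t = max 0 (1 - real (Suc n) * infdist t (Sa T a))"

lemma Sa_ne: "a \<ge> 0 \<Longrightarrow> 0 \<in> Sa T a"
  unfolding Sa_def by (rule CollectI, rule exI[of _ 0]) simp

lemma Sa_shift: "s \<in> Sa T a \<Longrightarrow> s + T \<in> Sa T a" "s \<in> Sa T a \<Longrightarrow> s - T \<in> Sa T a"
proof -
  assume "s \<in> Sa T a"
  then obtain k :: int where k: "real_of_int k * T \<le> s" "s \<le> real_of_int k * T + a" unfolding Sa_def by blast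
  have "real_of_int (k+1) * T \<le> s + T \<and> s + T \<le> real_of_int (k+1) * T + a" using k by (simp add: algebra_simps)
  then show "s + T \<in> Sa T a" unfolding Sa_def by blast
  have "real_of_int (k-1) * T \<le> s - T \<and> s - T \<le> real_of_int (k-1) * T + a" using k by (simp add: algebra_simps)
  then show "s - T \<in> Sa T a" unfolding Sa_def by blast
qed

lemma infdist_le_shift:
  assumes ne: "A \<noteq> {}" and h: "\<And>s. s \<in> A \<Longrightarrow> \<exists>s'\<in>A. dist x s' \<le> dist y s"
  shows "infdist x A \<le> infdist y A"
proof -
  have "infdist x A \<le> dist y s" if "s \<in> A" for s
    using h[OF that] by (meson infdist_le order_trans)
  then show ?thesis unfolding infdist_notempty[OF ne] using ne by (intro cINF_greatest) auto
qed

lemma infdist_Sa_per: assumes "a \<ge> 0" shows "infdist (t + T) (Sa T a) = infdist t (Sa T a)"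
proof (rule antisym)
  have ne: "Sa T a \<noteq> {}" using Sa_ne[OF assms] by blast
  show "infdist (t + T) (Sa T a) \<le> infdist t (Sa T a)"
  proof (rule infdist_le_shift[OF ne])
    fix s assume "s \<in> Sa T a"
    then show "\<exists>s'\<in>Sa T a. dist (t + T) s' \<le> dist t s"
      by (intro bexI[of _ "s + T"]) (auto simp: dist_real_def Sa_shift)
  qed
  show "infdist t (Sa T a) \<le> infdist (t + T) (Sa T a)"
  proof (rule infdist_le_shift[OF ne])
    fix s assume "s \<in> Sa T a"
    then show "\<exists>s'\<in>Sa T a. dist t s' \<le> dist (t + T) s"
      by (intro bexI[of _ "s - T"]) (auto simp: dist_real_def Sa_shift)
  qed
qed

lemma fc_cont: "continuous_on UNIV (fc T a n)"
  unfolding fc_def by (intro continuous_intros)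

lemma fc_per: "a \<ge> 0 \<Longrightarrow> periodic_fun T (fc T a n)"
  unfolding periodic_fun_def fc_def using infdist_Sa_per by simp

lemma fc_bound: "0 \<le> fc T a n t" "fc T a n t \<le> 1"
  unfolding fc_def using infdist_nonneg[of t "Sa T a"] by auto

lemma fc_meas: "fc T a n \<in> borel_measurable borel"
  by (rule borel_measurable_continuous_onI[OF fc_cont])

lemma fc_lim:
  assumes T: "T > 0" and a: "0 \<le> a" "a < T" and t: "t \<in> {0..<T}"
  shows "(\<lambda>n. fc T a n t) \<longlonglongrightarrow> indicator {..a} t"
proof (cases "t \<le> a")
  case True
  then have "t \<in> Sa T a" unfolding Sa_def using t by (auto intro!: exI[of _ 0])
  then have "fc T a n t = 1" for n unfolding fc_def by simp
  then show ?thesis using True by simp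
next
  case False
  define \<delta> where "\<delta> = min (t - a) (T - t)"
  have dpos: "\<delta> > 0" using False t unfolding \<delta>_def by auto
  have ne: "Sa T a \<noteq> {}" using Sa_ne[OF a(1)] by blast
  have "\<delta> \<le> dist t s" if sin: "s \<in> Sa T a" for s
  proof -
    obtain k :: int where k: "real_of_int k * T \<le> s" "s \<le> real_of_int k * T + a"
      using sin unfolding Sa_def by blast
    show ?thesis
    proof (cases "k \<le> 0")
      case True
      then have "real_of_int k * T \<le> 0" using T by (simp add: mult_nonpos_nonneg)
      then have "s \<le> a" using k by linarith
      then show ?thesis unfolding \<delta>_def dist_real_def using False by auto
    next
      case False
      then have "1 \<le> real_of_int k" by simp
      then have "T \<le> real_of_int k * T" using mult_right_mono[of 1 "real_of_int k" T] T by simp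
      then have "T \<le> s" using k by linarith
      then show ?thesis unfolding \<delta>_def dist_real_def using t by auto
    qed
  qed
  then have dle: "\<delta> \<le> infdist t (Sa T a)"
    unfolding infdist_notempty[OF ne] using ne by (intro cINF_greatest) auto
  obtain N :: nat where N: "1 / \<delta> < real N" using reals_Archimedean2 by blast
  have "fc T a n t = 0" if "n \<ge> N" for n
  proof -
    have "1 < real N * \<delta>" using N dpos by (simp add: divide_less_eq)
    also have "\<dots> \<le> real (Suc n) * \<delta>" using that dpos by (intro mult_right_mono) auto
    also have "\<dots> \<le> real (Suc n) * infdist t (Sa T a)" using dle by (intro mult_left_mono) auto
    finally show ?thesis unfolding fc_def by simp
  qed
  then have "eventually (\<lambda>n. fc T a n t = 0) sequentially" unfolding eventually_sequentially by blast
  then have "(\<lambda>n. fc T a n t) \<longlonglongrightarrow> 0" by (rule tendsto_eventually)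
  then show ?thesis using False by simp
qed

lemma circ_cdf_lim:
  assumes T: "T > 0" and a: "0 \<le> a" "a < T" and c: "circ_meas T m"
  shows "(\<lambda>n. integral\<^sup>L m (fc T a n)) \<longlonglongrightarrow> measure m {..a}"
proof -
  interpret finite_measure m using circ_fin[OF c] .
  have "(\<lambda>n. integral\<^sup>L m (fc T a n)) \<longlonglongrightarrow> integral\<^sup>L m (indicator {..a} :: real \<Rightarrow> real)"
  proof (rule integral_dominated_convergence[where w="\<lambda>_. 1"])
    show "(indicator {..a} :: real \<Rightarrow> real) \<in> borel_measurable m"
      by (rule meas_borel_cong[OF circ_sets[OF c]]) simp
    show "fc T a n \<in> borel_measurable m" for n using meas_borel_cong[OF circ_sets[OF c] fc_meas] .
    show "integrable m (\<lambda>_. 1::real)" by simp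
    show "AE x in m. (\<lambda>n. fc T a n x) \<longlonglongrightarrow> indicator {..a} x"
      using circ_AE[OF c] by eventually_elim (rule fc_lim[OF T a])
    show "\<And>n. AE x in m. norm (fc T a n x) \<le> 1" using fc_bound by auto
  qed
  then show ?thesis using circ_space[OF c] by simp
qed

definition msum :: "('v::finite \<Rightarrow> real measure) \<Rightarrow> real measure" where
  "msum \<mu> = measure_of UNIV (sets borel) (\<lambda>A. \<Sum>y\<in>UNIV. emeasure (\<mu> y) A)"

lemma sets_msum[simp]: "sets (msum \<mu>) = sets borel"
proof -
  interpret sigma_algebra UNIV "sets borel" using sets.sigma_algebra_axioms[of borel] by simp
  show ?thesis unfolding msum_def by simp
qed

lemma emeasure_msum:
  fixes \<mu> :: "'v::finite \<Rightarrow> real measure"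
  assumes s: "\<And>y. sets (\<mu> y) = sets borel" and A: "A \<in> sets borel"
  shows "emeasure (msum \<mu>) A = (\<Sum>y\<in>UNIV. emeasure (\<mu> y) A)"
  unfolding msum_def
proof (rule emeasure_measure_of_sigma)
  show "sigma_algebra UNIV (sets borel)" using sets.sigma_algebra_axioms[of borel] by simp
  show "positive (sets borel) (\<lambda>A. \<Sum>y\<in>UNIV. emeasure (\<mu> y) A)" unfolding positive_def by simp
  show "countably_additive (sets borel) (\<lambda>A. \<Sum>y\<in>UNIV. emeasure (\<mu> y) A)"
    unfolding countably_additive_def
  proof (intro allI impI)
    fix F :: "nat \<Rightarrow> real set"
    assume F: "range F \<subseteq> sets borel" "disjoint_family F"
    have "(\<Sum>i. \<Sum>y\<in>UNIV. emeasure (\<mu> y) (F i)) = (\<Sum>y\<in>UNIV. \<Sum>i. emeasure (\<mu> y) (F i))"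
      by (rule suminf_sum) (rule summableI)
    also have "\<dots> = (\<Sum>y\<in>UNIV. emeasure (\<mu> y) (\<Union>i. F i))"
      by (intro sum.cong refl suminf_emeasure) (use F s in auto)
    finally show "(\<Sum>i. \<Sum>y\<in>UNIV. emeasure (\<mu> y) (F i)) = (\<Sum>y\<in>UNIV. emeasure (\<mu> y) (\<Union> (range F)))" .
  qed
  show "A \<in> sets borel" by (rule A)
qed

lemma circ_cdf_neg: assumes "circ_meas T m" "a < 0" shows "measure m {..a} = 0"
proof -
  have "{..a} \<inter> {0..<T} = {}" using assms(2) by auto
  then have "emeasure m {..a} = 0" using circ_null[OF assms(1)] by simp
  then show ?thesis by (simp add: measure_def)
qed

lemma circ_cdf_big: assumes c: "circ_meas T m" "T \<le> a" shows "measure m {..a} = measure m UNIV"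
proof -
  have "emeasure m {..a} = emeasure m UNIV"
    by (rule emeasure_eq_AE) (use circ_AE[OF c(1)] c(2) circ_sets[OF c(1)] in \<open>auto elim: eventually_mono\<close>)
  then show ?thesis by (simp add: measure_def)
qed

lemma L_closed:
  fixes \<mu> :: "'v::finite \<Rightarrow> real measure"
  assumes T: "T > 0" and c: "\<And>y. circ_meas T (\<mu> y)" and tot: "(\<Sum>y\<in>UNIV. measure (\<mu> y) UNIV) = T"
    and H: "\<And>a n. 0 \<le> a \<Longrightarrow> a < T \<Longrightarrow> (\<Sum>y\<in>UNIV. integral\<^sup>L (\<mu> y) (fc T a n)) = integral\<^sup>L (lamT T) (fc T a n)"
  shows "time_abs_cont T \<mu>"
proof -
  have s: "\<And>y. sets (\<mu> y) = sets borel" using c circ_sets by blast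
  have fin: "\<And>y A. emeasure (\<mu> y) A < top"
    using c circ_fin finite_measure.emeasure_finite by (metis top.not_eq_extremum)
  have msA: "measure (msum \<mu>) A = (\<Sum>y\<in>UNIV. measure (\<mu> y) A)" if "A \<in> sets borel" for A
    unfolding measure_def emeasure_msum[of \<mu>, OF s that] by (subst enn2real_sum) (use fin in auto)
  have eqcdf: "(\<Sum>y\<in>UNIV. measure (\<mu> y) {..a}) = measure (lamT T) {..a}" for a
  proof -
    consider "a < 0" | "0 \<le> a" "a < T" | "T \<le> a" by linarith
    then show ?thesis
    proof cases
      case 1 then show ?thesis using circ_cdf_neg[OF c] circ_cdf_neg[OF circ_lamT[OF T]] by simp
    next
      case 3 then show ?thesis using circ_cdf_big[OF c] circ_cdf_big[OF circ_lamT[OF T]] tot measure_lamT_UNIV[OF T] by simp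
    next
      case 2
      have l1: "(\<lambda>n. \<Sum>y\<in>UNIV. integral\<^sup>L (\<mu> y) (fc T a n)) \<longlonglongrightarrow> (\<Sum>y\<in>UNIV. measure (\<mu> y) {..a})"
        by (intro tendsto_sum circ_cdf_lim[OF T 2 c])
      have l2: "(\<lambda>n. \<Sum>y\<in>UNIV. integral\<^sup>L (\<mu> y) (fc T a n)) \<longlonglongrightarrow> measure (lamT T) {..a}"
        unfolding H[OF 2] by (rule circ_cdf_lim[OF T 2 circ_lamT[OF T]])
      show ?thesis using LIMSEQ_unique[OF l1 l2] .
    qed
  qed
  have fbm1: "finite_borel_measure (msum \<mu>)"
  proof -
    have "emeasure (msum \<mu>) UNIV \<noteq> \<infinity>" using emeasure_msum[of \<mu> UNIV] s fin by (simp add: less_top)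
    then have "finite_measure (msum \<mu>)"
      by (intro finite_measureI) (metis sets_eq_imp_space_eq sets_msum space_borel)
    then show ?thesis unfolding finite_borel_measure_def finite_borel_measure_axioms_def by simp
  qed
  have fbm2: "finite_borel_measure (lamT T)"
    using circ_fin[OF circ_lamT[OF T]] unfolding finite_borel_measure_def finite_borel_measure_axioms_def by simp
  have nu: "msum \<mu> = lamT T"
    by (rule cdf_unique'[OF fbm1 fbm2]) (auto simp: cdf_def msA eqcdf)
  have ac: "absolutely_continuous (lborel :: real measure) (\<mu> y)" for y
    unfolding absolutely_continuous_def
  proof
    fix N :: "real set" assume N: "N \<in> null_sets lborel"
    then have Nb: "N \<in> sets borel" by auto
    have "emeasure (lamT T) N \<le> emeasure lborel N" using emeasure_lamT[OF Nb] Nb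
      by (simp add: emeasure_mono)
    then have "emeasure (msum \<mu>) N = 0" using N nu by auto
    then have "(\<Sum>y\<in>UNIV. emeasure (\<mu> y) N) = 0" using emeasure_msum[of \<mu>, OF s Nb] by simp
    then have "emeasure (\<mu> y) N = 0" by simp
    then show "N \<in> null_sets (\<mu> y)" using Nb s by auto
  qed
  define m where "m y = RN_deriv lborel (\<mu> y)" for y
  have mm: "m y \<in> borel_measurable borel" for y unfolding m_def
    using borel_measurable_RN_deriv[of lborel "\<mu> y"] by simp
  have dm: "\<mu> y = density lborel (m y)" for y
    unfolding m_def using sigma_finite_measure.density_RN_deriv[OF sigma_finite_lborel ac] s by simp
  have "density lborel (\<lambda>t. \<Sum>y\<in>UNIV. m y t) = density lborel (indicator {0..<T})"
  proof (rule measure_eqI)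
    show "sets (density lborel (\<lambda>t. \<Sum>y\<in>UNIV. m y t)) = sets (density lborel (indicator {0..<T}))" by simp
    fix A assume "A \<in> sets (density lborel (\<lambda>t. \<Sum>y\<in>UNIV. m y t))"
    then have A: "A \<in> sets borel" by simp
    have "emeasure (density lborel (\<lambda>t. \<Sum>y\<in>UNIV. m y t)) A = (\<integral>\<^sup>+ t. (\<Sum>y\<in>UNIV. m y t) * indicator A t \<partial>lborel)"
      using A mm by (subst emeasure_density) auto
    also have "\<dots> = (\<integral>\<^sup>+ t. (\<Sum>y\<in>UNIV. m y t * indicator A t) \<partial>lborel)"
      by (simp add: sum_distrib_right)
    also have "\<dots> = (\<Sum>y\<in>UNIV. \<integral>\<^sup>+ t. m y t * indicator A t \<partial>lborel)"
      by (rule nn_integral_sum) (use mm A in auto)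
    also have "\<dots> = (\<Sum>y\<in>UNIV. emeasure (\<mu> y) A)"
      by (intro sum.cong refl) (use A mm dm in \<open>simp add: emeasure_density\<close>)
    also have "\<dots> = emeasure (lamT T) A" using emeasure_msum[of \<mu>, OF s A] nu by simp
    also have "\<dots> = emeasure (density lborel (indicator {0..<T})) A" by (simp add: lamT_def)
    finally show "emeasure (density lborel (\<lambda>t. \<Sum>y\<in>UNIV. m y t)) A = emeasure (density lborel (indicator {0..<T})) A" .
  qed
  then have ae: "AE t in lborel. (\<Sum>y\<in>UNIV. m y t) = indicator {0..<T} t"
    by (subst (asm) sigma_finite_measure.density_unique_iff[OF sigma_finite_lborel]) (use mm in auto)
  show ?thesis unfolding time_abs_cont_def
  proof (intro exI[of _ m] conjI allI)
    fix y show "m y \<in> borel_measurable borel" by (rule mm)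
    show "\<mu> y = density lborel (m y)" by (rule dm)
  next
    show "AE t in lborel. 0 \<le> t \<and> t < T \<longrightarrow> (\<Sum>y\<in>UNIV. m y t) = 1"
      using ae by eventually_elim auto
  qed
qed

definition hs :: "(real \<Rightarrow> real) \<Rightarrow> nat \<Rightarrow> real \<Rightarrow> real" where
  "hs g n t = (SUP s. g s - real n * \<bar>s - t\<bar>)"

context
  fixes g :: "real \<Rightarrow> real" and G :: real
  assumes gB: "\<And>t. \<bar>g t\<bar> \<le> G"
begin

lemma hs_bdd: "bdd_above (range (\<lambda>s. g s - real n * \<bar>s - t\<bar>))"
proof (rule bdd_aboveI2)
  fix s show "g s - real n * \<bar>s - t\<bar> \<le> G" using gB[of s] by (smt (verit) mult_nonneg_nonneg of_nat_0_le_iff abs_ge_zero)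
qed

lemma hs_ge: "g t \<le> hs g n t"
  unfolding hs_def using cSUP_upper[OF UNIV_I hs_bdd[of n t], of t] by simp

lemma hs_le: "hs g n t \<le> G"
  unfolding hs_def
proof (rule cSUP_least)
  fix s show "g s - real n * \<bar>s - t\<bar> \<le> G" using gB[of s] by (smt (verit) mult_nonneg_nonneg of_nat_0_le_iff abs_ge_zero)
qed simp

lemma hs_abs: "\<bar>hs g n t\<bar> \<le> G"
  using hs_ge[of t n] hs_le[of n t] gB[of t] by linarith

lemma hs_lip1: "hs g n t \<le> hs g n t' + real n * \<bar>t - t'\<bar>"
proof -
  have "hs g n t \<le> hs g n t' + real n * \<bar>t - t'\<bar>"
    unfolding hs_def
  proof (rule cSUP_least)
    fix s
    have "g s - real n * \<bar>s - t\<bar> \<le> g s - real n * \<bar>s - t'\<bar> + real n * \<bar>t - t'\<bar>"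
    proof -
      have "\<bar>s - t'\<bar> \<le> \<bar>s - t\<bar> + \<bar>t - t'\<bar>" by linarith
      then have "real n * \<bar>s - t'\<bar> \<le> real n * \<bar>s - t\<bar> + real n * \<bar>t - t'\<bar>"
        by (metis distrib_left mult_left_mono of_nat_0_le_iff)
      then show ?thesis by linarith
    qed
    also have "\<dots> \<le> (SUP s. g s - real n * \<bar>s - t'\<bar>) + real n * \<bar>t - t'\<bar>"
      using cSUP_upper[OF UNIV_I hs_bdd[of n t'], of s] by simp
    finally show "g s - real n * \<bar>s - t\<bar> \<le> (SUP s. g s - real n * \<bar>s - t'\<bar>) + real n * \<bar>t - t'\<bar>" .
  qed simp
  then show ?thesis .
qed

lemma hs_cont: "continuous_on UNIV (hs g n)"
proof (rule lipschitz_on_continuous_on)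
  show "(real n)-lipschitz_on UNIV (hs g n)"
  proof (rule lipschitz_onI)
    fix x y :: real
    show "dist (hs g n x) (hs g n y) \<le> real n * dist x y"
      using hs_lip1[of n x y] hs_lip1[of n y x] unfolding dist_real_def by (simp add: abs_minus_commute abs_le_iff)
  qed simp
qed

lemma hs_per:
  assumes p: "periodic_fun T g" shows "periodic_fun T (hs g n)"
  unfolding periodic_fun_def
proof
  fix t
  have pg: "g (s - T) = g s" for s using p unfolding periodic_fun_def by (metis diff_add_cancel)
  have pg2: "g (s + T) = g s" for s using p unfolding periodic_fun_def by blast
  show "hs g n (t + T) = hs g n t"
  proof (rule antisym)
    show "hs g n (t + T) \<le> hs g n t"
      unfolding hs_def
    proof (rule cSUP_least)
      fix s
      have "g s - real n * \<bar>s - (t + T)\<bar> = g (s - T) - real n * \<bar>(s - T) - t\<bar>" using pg[of s] by (simp add: algebra_simps)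
      also have "\<dots> \<le> (SUP s. g s - real n * \<bar>s - t\<bar>)" by (rule cSUP_upper[OF UNIV_I hs_bdd])
      finally show "g s - real n * \<bar>s - (t + T)\<bar> \<le> (SUP s. g s - real n * \<bar>s - t\<bar>)" .
    qed simp
    show "hs g n t \<le> hs g n (t + T)"
      unfolding hs_def
    proof (rule cSUP_least)
      fix s
      have "g s - real n * \<bar>s - t\<bar> = g (s + T) - real n * \<bar>(s + T) - (t + T)\<bar>" using pg2[of s] by simp
      also have "\<dots> \<le> (SUP s. g s - real n * \<bar>s - (t + T)\<bar>)" by (rule cSUP_upper[OF UNIV_I hs_bdd])
      finally show "g s - real n * \<bar>s - t\<bar> \<le> (SUP s. g s - real n * \<bar>s - (t + T)\<bar>)" .
    qed simp
  qed
qed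

lemma hs_lim:
  assumes c: "isCont g t" shows "(\<lambda>n. hs g n t) \<longlonglongrightarrow> g t"
  unfolding lim_sequentially
proof (intro allI impI)
  fix r :: real assume r: "r > 0"
  obtain \<eta> where eta: "\<eta> > 0" "\<And>s. dist s t < \<eta> \<Longrightarrow> dist (g s) (g t) < r / 2"
    using c r unfolding continuous_at_eps_delta by (metis half_gt_zero)
  obtain N :: nat where N: "2 * G / \<eta> < real N" using reals_Archimedean2 by blast
  have G0: "0 \<le> G" using gB[of t] by linarith
  show "\<exists>no. \<forall>n\<ge>no. dist (hs g n t) (g t) < r"
  proof (intro exI allI impI)
    fix n assume n: "N \<le> n"
    have "hs g n t \<le> g t + r / 2"
      unfolding hs_def
    proof (rule cSUP_least)
      fix s
      show "g s - real n * \<bar>s - t\<bar> \<le> g t + r / 2"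
      proof (cases "\<bar>s - t\<bar> < \<eta>")
        case True
        then have "\<bar>g s - g t\<bar> < r / 2" using eta(2)[of s] by (simp add: dist_real_def)
        then show ?thesis by (smt (verit) mult_nonneg_nonneg of_nat_0_le_iff abs_ge_zero)
      next
        case False
        have "2 * G < real N * \<eta>" using N eta(1) by (simp add: divide_less_eq)
        also have "\<dots> \<le> real n * \<bar>s - t\<bar>" using n False eta(1) by (intro mult_mono) auto
        finally have "2 * G < real n * \<bar>s - t\<bar>" .
        then show ?thesis using gB[of s] gB[of t] r by linarith
      qed
    qed simp
    then show "dist (hs g n t) (g t) < r" using hs_ge[of t n] r unfolding dist_real_def by linarith
  qed
qed

end

lemma approx_upper:
  fixes g :: "real \<Rightarrow> real"
  assumes T: "T > 0" and gm: "g \<in> borel_measurable borel" and gB: "\<And>t. \<bar>g t\<bar> \<le> G"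
    and gp: "periodic_fun T g"
    and gc: "AE t in lborel. t \<in> {0..<T} \<longrightarrow> isCont g t" and e: "\<epsilon> > 0"
  shows "\<exists>h. continuous_on UNIV h \<and> periodic_fun T h \<and> (\<forall>t. g t \<le> h t) \<and> (\<forall>t. \<bar>h t\<bar> \<le> G)
            \<and> integral\<^sup>L (lamT T) (\<lambda>t. h t - g t) < \<epsilon>"
proof -
  have c: "circ_meas T (lamT T)" by (rule circ_lamT[OF T])
  interpret finite_measure "lamT T" using circ_fin[OF c] .
  have hm: "hs g n \<in> borel_measurable borel" for n by (rule borel_measurable_continuous_onI[OF hs_cont[where g=g and G=G, OF gB]])
  have "(\<lambda>n. integral\<^sup>L (lamT T) (\<lambda>t. hs g n t - g t)) \<longlonglongrightarrow> integral\<^sup>L (lamT T) (\<lambda>t. 0)"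
  proof (rule integral_dominated_convergence[where w="\<lambda>_. 2 * G"])
    show "(\<lambda>t. 0::real) \<in> borel_measurable (lamT T)" by simp
    show "(\<lambda>t. hs g n t - g t) \<in> borel_measurable (lamT T)" for n
      by (rule meas_borel_cong[OF sets_lamT]) (use hm gm in simp)
    show "integrable (lamT T) (\<lambda>_. 2 * G)" by simp
    have "AE t in lamT T. t \<in> {0..<T} \<longrightarrow> isCont g t"
      unfolding lamT_def using gc by (subst AE_density) (auto elim: eventually_mono)
    then show "AE t in lamT T. (\<lambda>n. hs g n t - g t) \<longlonglongrightarrow> 0"
      using circ_AE[OF c]
    proof eventually_elim
      case (elim t)
      then have "(\<lambda>n. hs g n t) \<longlonglongrightarrow> g t" using hs_lim[where g=g and G=G, OF gB] by blast
      then show ?case using tendsto_diff[OF _ tendsto_const[of "g t"]] by fastforce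
    qed
    show "AE t in lamT T. norm (hs g n t - g t) \<le> 2 * G" for n
    proof (rule AE_I2)
      fix t
      show "norm (hs g n t - g t) \<le> 2 * G"
        using hs_abs[where g=g and G=G, OF gB, of n t] gB[of t] by (simp add: abs_le_iff)
    qed
  qed
  then have L0: "(\<lambda>n. integral\<^sup>L (lamT T) (\<lambda>t. hs g n t - g t)) \<longlonglongrightarrow> 0" by simp
  have "eventually (\<lambda>n. integral\<^sup>L (lamT T) (\<lambda>t. hs g n t - g t) < \<epsilon>) sequentially"
    by (rule order_tendstoD(2)[OF L0 e])
  then obtain n where n: "integral\<^sup>L (lamT T) (\<lambda>t. hs g n t - g t) < \<epsilon>"
    unfolding eventually_sequentially by blast
  have A1: "continuous_on UNIV (hs g n)" by (rule hs_cont[where g=g and G=G, OF gB])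
  have A2: "periodic_fun T (hs g n)" by (rule hs_per[where g=g and G=G, OF gB gp])
  have A3: "\<forall>t. g t \<le> hs g n t" using hs_ge[where g=g and G=G, OF gB] by blast
  have A4: "\<forall>t. \<bar>hs g n t\<bar> \<le> G" using hs_abs[where g=g and G=G, OF gB] by blast
  show ?thesis using A1 A2 A3 A4 n by blast
qed

lemma weak_basis1:
  fixes f :: "real \<Rightarrow> real"
  assumes "open U" "continuous_on UNIV f" "periodic_fun T f"
  shows "openin (weak_top T E) {p \<in> Mstar T E. (\<integral>t. f t \<partial>(fst p y)) \<in> U}"
  unfolding weak_top_def openin_topology_generated_by_iff
  apply (rule generate_topology_on.Basis, rule UnI1)
  unfolding mem_Collect_eq by (intro exI[of _ y] exI[of _ f] exI[of _ U] conjI refl assms)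

lemma weak_basis2:
  fixes f :: "real \<Rightarrow> real"
  assumes "open U" "continuous_on UNIV f" "periodic_fun T f"
  shows "openin (weak_top T E) {p \<in> Mstar T E. (\<integral>t. f t \<partial>(snd p e)) \<in> U}"
  unfolding weak_top_def openin_topology_generated_by_iff
  apply (rule generate_topology_on.Basis, rule UnI2)
  unfolding mem_Collect_eq by (intro exI[of _ e] exI[of _ f] exI[of _ U] conjI refl assms)

lemma weak_topspace: "topspace (weak_top T E) = Mstar T E"
proof
  show "topspace (weak_top T E) \<subseteq> Mstar T E"
    unfolding weak_top_def topology_generated_by_topspace by auto
  have "openin (weak_top T E) {p \<in> Mstar T E. (\<integral>t. (\<lambda>_. 0::real) t \<partial>(fst p undefined)) \<in> UNIV}"
    by (rule weak_basis1) (auto simp: periodic_fun_def)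
  then show "Mstar T E \<subseteq> topspace (weak_top T E)" using openin_subset by force
qed

definition wcont :: "real \<Rightarrow> ('v \<times> 'v) set \<Rightarrow> ((('v::finite \<Rightarrow> real measure) \<times> ('v \<times> 'v \<Rightarrow> real measure)) \<Rightarrow> real) \<Rightarrow> bool" where
  "wcont T E \<Phi> \<longleftrightarrow> (\<forall>p\<in>Mstar T E. \<forall>\<delta>>0. \<exists>N. openin (weak_top T E) N \<and> p \<in> N \<and> (\<forall>q\<in>N. \<bar>\<Phi> q - \<Phi> p\<bar> < \<delta>))"

lemma wcontD:
  assumes "wcont T E \<Phi>" "p \<in> Mstar T E" "\<delta> > 0"
  obtains N where "openin (weak_top T E) N" "p \<in> N" "\<And>q. q \<in> N \<Longrightarrow> \<bar>\<Phi> q - \<Phi> p\<bar> < \<delta>"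
  using assms unfolding wcont_def by meson

lemma wcont_int1:
  fixes f :: "real \<Rightarrow> real"
  assumes "continuous_on UNIV f" "periodic_fun T f"
  shows "wcont T E (\<lambda>p. \<integral>t. f t \<partial>(fst p y))"
  unfolding wcont_def
proof (intro ballI allI impI)
  fix p :: "('a \<Rightarrow> real measure) \<times> ('a \<times> 'a \<Rightarrow> real measure)" and \<delta> :: real
  assume p: "p \<in> Mstar T E" and d: "\<delta> > 0"
  let ?N = "{q \<in> Mstar T E. (\<integral>t. f t \<partial>(fst q y)) \<in> ball (\<integral>t. f t \<partial>(fst p y)) \<delta>}"
  have "openin (weak_top T E) ?N" by (rule weak_basis1) (use assms in auto)
  moreover have "p \<in> ?N" using p d by auto
  moreover have "\<forall>q\<in>?N. \<bar>(\<integral>t. f t \<partial>(fst q y)) - (\<integral>t. f t \<partial>(fst p y))\<bar> < \<delta>"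
    by (auto simp: dist_real_def abs_minus_commute)
  ultimately show "\<exists>N. openin (weak_top T E) N \<and> p \<in> N \<and> (\<forall>q\<in>N. \<bar>(\<integral>t. f t \<partial>(fst q y)) - (\<integral>t. f t \<partial>(fst p y))\<bar> < \<delta>)"
    by meson
qed

lemma wcont_int2:
  fixes f :: "real \<Rightarrow> real"
  assumes "continuous_on UNIV f" "periodic_fun T f"
  shows "wcont T E (\<lambda>p. \<integral>t. f t \<partial>(snd p e))"
  unfolding wcont_def
proof (intro ballI allI impI)
  fix p :: "('a \<Rightarrow> real measure) \<times> ('a \<times> 'a \<Rightarrow> real measure)" and \<delta> :: real
  assume p: "p \<in> Mstar T E" and d: "\<delta> > 0"
  let ?N = "{q \<in> Mstar T E. (\<integral>t. f t \<partial>(snd q e)) \<in> ball (\<integral>t. f t \<partial>(snd p e)) \<delta>}"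
  have "openin (weak_top T E) ?N" by (rule weak_basis2) (use assms in auto)
  moreover have "p \<in> ?N" using p d by auto
  moreover have "\<forall>q\<in>?N. \<bar>(\<integral>t. f t \<partial>(snd q e)) - (\<integral>t. f t \<partial>(snd p e))\<bar> < \<delta>"
    by (auto simp: dist_real_def abs_minus_commute)
  ultimately show "\<exists>N. openin (weak_top T E) N \<and> p \<in> N \<and> (\<forall>q\<in>N. \<bar>(\<integral>t. f t \<partial>(snd q e)) - (\<integral>t. f t \<partial>(snd p e))\<bar> < \<delta>)"
    by meson
qed

lemma wcont_const: "wcont T E (\<lambda>p. c)"
  unfolding wcont_def
proof (intro ballI allI impI)
  fix p \<delta> assume "p \<in> Mstar T E" "(\<delta>::real) > 0"
  then show "\<exists>N. openin (weak_top T E) N \<and> p \<in> N \<and> (\<forall>q\<in>N. \<bar>c - c\<bar> < \<delta>)"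
    using openin_topspace[of "weak_top T E"] unfolding weak_topspace by auto
qed

lemma wcont_add:
  assumes "wcont T E \<Phi>" "wcont T E \<Psi>"
  shows "wcont T E (\<lambda>p. \<Phi> p + \<Psi> p)"
  unfolding wcont_def
proof (intro ballI allI impI)
  fix p and \<delta> :: real assume p: "p \<in> Mstar T E" and d: "\<delta> > 0"
  obtain N1 where N1: "openin (weak_top T E) N1" "p \<in> N1" "\<And>q. q \<in> N1 \<Longrightarrow> \<bar>\<Phi> q - \<Phi> p\<bar> < \<delta>/2"
    using wcontD[OF assms(1) p, of "\<delta>/2"] d by auto
  obtain N2 where N2: "openin (weak_top T E) N2" "p \<in> N2" "\<And>q. q \<in> N2 \<Longrightarrow> \<bar>\<Psi> q - \<Psi> p\<bar> < \<delta>/2"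
    using wcontD[OF assms(2) p, of "\<delta>/2"] d by auto
  show "\<exists>N. openin (weak_top T E) N \<and> p \<in> N \<and> (\<forall>q\<in>N. \<bar>\<Phi> q + \<Psi> q - (\<Phi> p + \<Psi> p)\<bar> < \<delta>)"
  proof (intro exI[of _ "N1 \<inter> N2"] conjI ballI)
    fix q assume "q \<in> N1 \<inter> N2"
    then have a: "\<bar>\<Phi> q - \<Phi> p\<bar> < \<delta>/2" "\<bar>\<Psi> q - \<Psi> p\<bar> < \<delta>/2" using N1(3)[of q] N2(3)[of q] by auto
    then show "\<bar>\<Phi> q + \<Psi> q - (\<Phi> p + \<Psi> p)\<bar> < \<delta>" unfolding abs_less_iff by linarith
  qed (use N1 N2 in auto)
qed

lemma absneg: "\<bar>- a - - b\<bar> = \<bar>a - (b::real)\<bar>" by (simp add: abs_if)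

lemma wcont_neg: "wcont T E \<Phi> \<Longrightarrow> wcont T E (\<lambda>p. - \<Phi> p)"
  unfolding wcont_def absneg .

lemma wcont_diff: "wcont T E \<Phi> \<Longrightarrow> wcont T E \<Psi> \<Longrightarrow> wcont T E (\<lambda>p. \<Phi> p - \<Psi> p)"
  using wcont_add[of T E \<Phi> "\<lambda>p. - \<Psi> p"] wcont_neg[of T E \<Psi>] by simp

lemma wcont_sum:
  assumes "finite I" "\<And>i. i \<in> I \<Longrightarrow> wcont T E (\<Phi> i)"
  shows "wcont T E (\<lambda>p. \<Sum>i\<in>I. \<Phi> i p)"
  using assms
proof (induction I rule: finite_induct)
  case empty then show ?case using wcont_const[of T E 0] by simp
next
  case (insert x F)
  then show ?case using wcont_add[of T E "\<Phi> x" "\<lambda>p. \<Sum>i\<in>F. \<Phi> i p"] by simp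
qed

locale setting =
  fixes T0 :: real
    and r :: "'v::finite \<Rightarrow> 'v \<Rightarrow> real \<Rightarrow> real"
    and \<phi> :: "'v \<Rightarrow> real \<Rightarrow> real"
    and F :: "'v \<Rightarrow> 'v \<Rightarrow> real \<Rightarrow> real"
  assumes T0_pos: "T0 > 0"
    and r_nonneg: "\<And>y z t. r y z t \<ge> 0"
    and r_meas: "\<And>y z. r y z \<in> borel_measurable borel"
    and r_periodic: "\<And>y z. periodic_fun T0 (r y z)"
    and r_diag: "\<And>x t. r x x t = 0"
    and A1: "\<And>y z. (\<exists>t>0. r y z t > 0) \<Longrightarrow> (\<forall>t>0. r y z t > 0)"
    and A3_upper: "\<exists>C. \<forall>(y, z)\<in>edges r. \<forall>t\<in>{0..T0}. r y z t \<le> C"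
    and A4: "{t\<in>{0..<T0}. \<exists>y z. \<not> isCont (r y z) t} \<in> null_sets lborel"
    and phi_periodic: "\<And>y. periodic_fun T0 (\<phi> y)"
    and phi_C1: "\<And>y. \<exists>\<phi>'. (\<forall>t. (\<phi> y has_real_derivative \<phi>' t) (at t)) \<and> continuous_on UNIV \<phi>'"
    and F_periodic: "\<And>y z. (y, z) \<in> edges r \<Longrightarrow> periodic_fun T0 (F y z)"
    and F_cont: "\<And>y z. (y, z) \<in> edges r \<Longrightarrow> continuous_on UNIV (F y z)"
begin

lemma r_zero:
  assumes "(y, z) \<notin> edges r" shows "r y z t = 0"
proof (cases "y = z")
  case True then show ?thesis using r_diag by simp
next
  case False
  then have "\<not> (\<forall>t>0. r y z t > 0)" using assms unfolding edges_def by auto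
  note nall = this
  have pos0: "r y z s = 0" if s: "s > 0" for s
  proof (rule ccontr)
    assume "r y z s \<noteq> 0"
    then have "r y z s > 0" using r_nonneg[of y z s] by linarith
    then have "\<forall>t>0. r y z t > 0" using A1[of y z] s by blast
    then show False using nall by blast
  qed
  obtain k :: int where k: "t + real_of_int k * T0 \<in> {0..<T0}" using periodic_reduce[OF T0_pos] by blast
  have "r y z (t + real_of_int (k + 1) * T0) = r y z t" by (rule periodic_int[OF r_periodic])
  moreover have "t + real_of_int (k + 1) * T0 > 0" using k T0_pos by (simp add: algebra_simps)
  ultimately show ?thesis using pos0 by metis
qed

lemma finite_edges: "finite (edges r)" by simp

lemma r_bound: "\<exists>C. \<forall>y z t. \<bar>r y z t\<bar> \<le> C"
proof -
  obtain C where C: "\<forall>(y, z)\<in>edges r. \<forall>t\<in>{0..T0}. r y z t \<le> C" using A3_upper by blast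
  have "\<bar>r y z t\<bar> \<le> max C 0" for y z t
  proof (cases "(y, z) \<in> edges r")
    case True
    have "r y z t \<le> C"
      by (rule periodic_bound_ext[OF T0_pos r_periodic, where P="\<lambda>x. x \<le> C"]) (use C True in auto)
    then show ?thesis using r_nonneg[of y z t] by simp
  next
    case False then show ?thesis using r_zero by simp
  qed
  then show ?thesis by blast
qed

lemma F_bound: "\<exists>B. \<forall>(y, z)\<in>edges r. \<forall>t. \<bar>F y z t\<bar> \<le> B"
proof -
  have "\<forall>e\<in>edges r. \<exists>B. \<forall>t. \<bar>F (fst e) (snd e) t\<bar> \<le> B"
    using periodic_cont_bounded[OF T0_pos F_periodic F_cont] by auto
  then obtain Bf where Bf: "\<forall>e\<in>edges r. \<forall>t. \<bar>F (fst e) (snd e) t\<bar> \<le> Bf e" by metis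
  have "\<bar>F y z t\<bar> \<le> (\<Sum>e\<in>edges r. \<bar>Bf e\<bar>)" if "(y, z) \<in> edges r" for y z t
  proof -
    have "\<bar>F y z t\<bar> \<le> Bf (y, z)" using bspec[OF Bf that] by simp
    also have "\<dots> \<le> \<bar>Bf (y, z)\<bar>" by simp
    also have "\<dots> \<le> (\<Sum>e\<in>edges r. \<bar>Bf e\<bar>)" by (rule member_le_sum) (use that in auto)
    finally show ?thesis .
  qed
  then show ?thesis by auto
qed

lemma phi_props:
  "continuous_on UNIV (\<phi> y)" "continuous_on UNIV (deriv (\<phi> y))" "periodic_fun T0 (deriv (\<phi> y))"
proof -
  obtain \<phi>' where d: "\<And>t. (\<phi> y has_real_derivative \<phi>' t) (at t)" and c: "continuous_on UNIV \<phi>'"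
    using phi_C1[of y] by blast
  have de: "deriv (\<phi> y) = \<phi>'" using DERIV_imp_deriv[OF d] by auto
  show "continuous_on UNIV (\<phi> y)" using d by (intro continuous_at_imp_continuous_on ballI DERIV_continuous) auto
  show "continuous_on UNIV (deriv (\<phi> y))" using c de by simp
  have "\<phi>' (t + T0) = \<phi>' t" for t
  proof -
    have "((\<lambda>x. \<phi> y (x + T0)) has_real_derivative \<phi>' (t + T0)) (at t)"
      using d[of "t + T0"] DERIV_shift by blast
    moreover have "(\<lambda>x. \<phi> y (x + T0)) = \<phi> y" using phi_periodic[of y] unfolding periodic_fun_def by auto
    ultimately have "(\<phi> y has_real_derivative \<phi>' (t + T0)) (at t)" by simp
    then show ?thesis using d[of t] DERIV_unique by blast
  qed
  then show "periodic_fun T0 (deriv (\<phi> y))" unfolding de periodic_fun_def by simp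
qed

definition gg :: "'v \<Rightarrow> real \<Rightarrow> real" where
  "gg y t = (\<Sum>z\<in>UNIV. r y z t * exp (F y z t)) - (\<Sum>z\<in>UNIV. r y z t)"

definition gterm :: "'v \<Rightarrow> 'v \<Rightarrow> real \<Rightarrow> real" where
  "gterm y z t = (if (y, z) \<in> edges r then r y z t * exp (F y z t) else 0)"

lemma gg_alt: "gg y t = (\<Sum>z\<in>UNIV. gterm y z t) - (\<Sum>z\<in>UNIV. r y z t)"
  unfolding gg_def gterm_def by (intro arg_cong2[where f="(-)"] sum.cong refl) (auto simp: r_zero)

lemma gterm_meas: "gterm y z \<in> borel_measurable borel"
proof (cases "(y, z) \<in> edges r")
  case True
  have "F y z \<in> borel_measurable borel" using F_cont[OF True] by (rule borel_measurable_continuous_onI)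
  then show ?thesis unfolding gterm_def using True r_meas[of y z] by simp
next
  case False then show ?thesis unfolding gterm_def by simp
qed

lemma gg_meas: "gg y \<in> borel_measurable borel"
proof -
  have "gg y = (\<lambda>t. (\<Sum>z\<in>UNIV. gterm y z t) - (\<Sum>z\<in>UNIV. r y z t))" using gg_alt by auto
  moreover have "(\<lambda>t. (\<Sum>z\<in>UNIV. gterm y z t) - (\<Sum>z\<in>UNIV. r y z t)) \<in> borel_measurable borel"
    using gterm_meas r_meas by (intro borel_measurable_diff borel_measurable_sum) auto
  ultimately show ?thesis by simp
qed

lemma gg_per: "periodic_fun T0 (gg y)"
  unfolding periodic_fun_def gg_alt
proof
  fix t
  have "gterm y z (t + T0) = gterm y z t" for z
    unfolding gterm_def using r_periodic[of y z] F_periodic[of y z] unfolding periodic_fun_def by auto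
  moreover have "r y z (t + T0) = r y z t" for z using r_periodic[of y z] unfolding periodic_fun_def by auto
  ultimately show "(\<Sum>z\<in>UNIV. gterm y z (t + T0)) - (\<Sum>z\<in>UNIV. r y z (t + T0)) = (\<Sum>z\<in>UNIV. gterm y z t) - (\<Sum>z\<in>UNIV. r y z t)"
    by simp
qed

lemma gg_bound: "\<exists>G. \<forall>y t. \<bar>gg y t\<bar> \<le> G"
proof -
  obtain C where C: "\<And>y z t. \<bar>r y z t\<bar> \<le> C" using r_bound by blast
  obtain B where B: "\<forall>(y, z)\<in>edges r. \<forall>t. \<bar>F y z t\<bar> \<le> B" using F_bound by blast
  have gt: "\<bar>gterm y z t\<bar> \<le> C * exp B" for y z t
  proof (cases "(y, z) \<in> edges r")
    case True
    have "\<bar>r y z t * exp (F y z t)\<bar> = \<bar>r y z t\<bar> * exp (F y z t)" by (simp add: abs_mult)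
    also have "\<dots> \<le> C * exp B"
    proof -
      have "\<bar>F y z t\<bar> \<le> B" using B True by auto
      then show ?thesis using C[of y z t] by (intro mult_mono) auto
    qed
    finally show ?thesis unfolding gterm_def using True by simp
  next
    case False
    have "0 \<le> C" using C[of y z t] by linarith
    then show ?thesis unfolding gterm_def using False by simp
  qed
  have "\<bar>gg y t\<bar> \<le> real CARD('v) * (C * exp B) + real CARD('v) * C" for y t
  proof -
    have "\<bar>gg y t\<bar> \<le> \<bar>\<Sum>z\<in>UNIV. gterm y z t\<bar> + \<bar>\<Sum>z\<in>UNIV. r y z t\<bar>" unfolding gg_alt by linarith
    also have "\<dots> \<le> (\<Sum>z\<in>UNIV. \<bar>gterm y z t\<bar>) + (\<Sum>z\<in>UNIV. \<bar>r y z t\<bar>)"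
      by (intro add_mono sum_abs)
    also have "\<dots> \<le> (\<Sum>z\<in>(UNIV::'v set). C * exp B) + (\<Sum>z\<in>(UNIV::'v set). C)"
      by (intro add_mono sum_mono gt C)
    finally show ?thesis by simp
  qed
  then show ?thesis by blast
qed

lemma gg_cont:
  assumes "\<And>y z. isCont (r y z) t" shows "isCont (gg y) t"
proof -
  have "isCont (gterm y z) t" for z
  proof (cases "(y, z) \<in> edges r")
    case True
    have "isCont (F y z) t" using F_cont[OF True] by (simp add: continuous_on_eq_continuous_at)
    then have "isCont (\<lambda>t. r y z t * exp (F y z t)) t"
      using assms by (intro continuous_intros) auto
    then show ?thesis unfolding gterm_def using True by simp
  next
    case False then show ?thesis unfolding gterm_def by simp
  qed
  then have "isCont (\<lambda>t. (\<Sum>z\<in>UNIV. gterm y z t) - (\<Sum>z\<in>UNIV. r y z t)) t"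
    using assms by (intro continuous_intros) auto
  moreover have "gg y = (\<lambda>t. (\<Sum>z\<in>UNIV. gterm y z t) - (\<Sum>z\<in>UNIV. r y z t))" using gg_alt by auto
  ultimately show ?thesis by simp
qed

lemma gg_cont_ae: "AE t in lborel. t \<in> {0..<T0} \<longrightarrow> isCont (gg y) t"
proof (rule AE_I')
  show "{t\<in>{0..<T0}. \<exists>y z. \<not> isCont (r y z) t} \<in> null_sets lborel" by (rule A4)
  show "{x \<in> space lborel. \<not> (x \<in> {0..<T0} \<longrightarrow> isCont (gg y) x)} \<subseteq> {t\<in>{0..<T0}. \<exists>y z. \<not> isCont (r y z) t}"
  proof
    fix x assume x: "x \<in> {x \<in> space lborel. \<not> (x \<in> {0..<T0} \<longrightarrow> isCont (gg y) x)}"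
    have "\<exists>y z. \<not> isCont (r y z) x"
    proof (rule ccontr)
      assume "\<not> (\<exists>y z. \<not> isCont (r y z) x)"
      then have "\<And>y z. isCont (r y z) x" by simp
      then have "isCont (gg y) x" by (rule gg_cont)
      then show False using x by simp
    qed
    then show "x \<in> {t\<in>{0..<T0}. \<exists>y z. \<not> isCont (r y z) t}" using x by simp
  qed
qed

end

lemma Mstar_props:
  assumes "p \<in> Mstar T E"
  shows "\<And>y. circ_meas T (fst p y)" "\<And>e. circ_meas T (snd p e)" "(\<Sum>y\<in>UNIV. measure (fst p y) UNIV) = T"
  using assms unfolding Mstar_def by auto

lemma sum_conv: "(\<Sum>i\<in>I. lam * A i + (1 - lam) * B i) = lam * (\<Sum>i\<in>I. A i) + (1 - lam) * (\<Sum>i\<in>I. B i :: real)"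
  by (simp add: sum.distrib sum_distrib_left)

lemma conv_comp:
  fixes f :: "real \<Rightarrow> real"
  assumes cc: "convex_comb_meas lam m1 m2 w" and lam: "0 \<le> lam" "lam \<le> 1"
    and c1: "circ_meas T m1" and c2: "circ_meas T m2"
    and f: "f \<in> borel_measurable borel" and B: "\<And>t. \<bar>f t\<bar> \<le> B"
  shows "integral\<^sup>L w f = lam * integral\<^sup>L m1 f + (1 - lam) * integral\<^sup>L m2 f"
  using conv_integral[OF cc lam circ_sets[OF c1] circ_sets[OF c2] f integrable_circ_glob[OF c1 f B] integrable_circ_glob[OF c2 f B]]
  by simp

context setting
begin

definition Lin :: "('v \<Rightarrow> real measure) \<Rightarrow> ('v \<times> 'v \<Rightarrow> real measure) \<Rightarrow> real" where
  "Lin \<mu> Q = - (\<Sum>y\<in>UNIV. \<integral>t. deriv (\<phi> y) t \<partial>(\<mu> y))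
     + (\<Sum>y\<in>UNIV. \<Sum>z\<in>UNIV. (\<integral>s. \<phi> y s \<partial>(Q (y, z))) - (\<integral>s. \<phi> y s \<partial>(Q (z, y))))
     + (\<Sum>(y, z)\<in>edges r. \<integral>t. F y z t \<partial>(Q (y, z)))"

definition G4 :: "('v \<Rightarrow> real measure) \<Rightarrow> real" where
  "G4 \<mu> = (\<Sum>y\<in>UNIV. integral\<^sup>L (\<mu> y) (gg y))"

lemma gg_eta: "gg y = (\<lambda>t. (\<Sum>z\<in>UNIV. r y z t * exp (F y z t)) - (\<Sum>z\<in>UNIV. r y z t))"
  by (rule ext) (simp add: gg_def)

lemma Ihat_split: "Ihat T0 r \<phi> F \<mu> Q = Lin \<mu> Q - G4 \<mu>"
  unfolding Ihat_def Lin_def G4_def gg_eta by simp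

lemma bnd_dphi: "\<exists>B. \<forall>t. \<bar>deriv (\<phi> y) t\<bar> \<le> B"
  using periodic_cont_bounded[OF T0_pos phi_props(3) phi_props(2)] .
lemma bnd_phi: "\<exists>B. \<forall>t. \<bar>\<phi> y t\<bar> \<le> B"
  using periodic_cont_bounded[OF T0_pos phi_periodic phi_props(1)] .
lemma bnd_F: "(y, z) \<in> edges r \<Longrightarrow> \<exists>B. \<forall>t. \<bar>F y z t\<bar> \<le> B"
  using periodic_cont_bounded[OF T0_pos F_periodic F_cont] by blast
lemma bnd_gg: "\<exists>B. \<forall>t. \<bar>gg y t\<bar> \<le> B"
  using gg_bound by blast

lemma meas_dphi: "deriv (\<phi> y) \<in> borel_measurable borel"
  by (rule borel_measurable_continuous_onI[OF phi_props(2)])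
lemma meas_phi: "\<phi> y \<in> borel_measurable borel"
  by (rule borel_measurable_continuous_onI[OF phi_props(1)])
lemma meas_F: "(y, z) \<in> edges r \<Longrightarrow> F y z \<in> borel_measurable borel"
  by (rule borel_measurable_continuous_onI[OF F_cont])

lemma convex_lin:
  assumes p: "p \<in> Mstar T0 (edges r)" and q: "q \<in> Mstar T0 (edges r)"
    and cc: "convex_comb_pair lam p q w" and lam: "0 \<le> lam" "lam \<le> 1"
  shows "Lin (fst w) (snd w) = lam * Lin (fst p) (snd p) + (1 - lam) * Lin (fst q) (snd q)"
    "G4 (fst w) = lam * G4 (fst p) + (1 - lam) * G4 (fst q)"
proof -
  note cp = Mstar_props[OF p] and cq = Mstar_props[OF q]
  have cf: "convex_comb_meas lam (fst p y) (fst q y) (fst w y)" for y using cc unfolding convex_comb_pair_def by auto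
  have cs: "convex_comb_meas lam (snd p e) (snd q e) (snd w e)" for e using cc unfolding convex_comb_pair_def by (cases e) auto
  have e1: "integral\<^sup>L (fst w y) (deriv (\<phi> y)) = lam * integral\<^sup>L (fst p y) (deriv (\<phi> y)) + (1 - lam) * integral\<^sup>L (fst q y) (deriv (\<phi> y))" for y
  proof -
    obtain B where "\<forall>t. \<bar>deriv (\<phi> y) t\<bar> \<le> B" using bnd_dphi by blast
    then show ?thesis by (intro conv_comp[OF cf lam cp(1) cq(1) meas_dphi]) auto
  qed
  have e2: "integral\<^sup>L (snd w e) (\<phi> y) = lam * integral\<^sup>L (snd p e) (\<phi> y) + (1 - lam) * integral\<^sup>L (snd q e) (\<phi> y)" for y e
  proof -
    obtain B where "\<forall>t. \<bar>\<phi> y t\<bar> \<le> B" using bnd_phi by blast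
    then show ?thesis by (intro conv_comp[OF cs lam cp(2) cq(2) meas_phi]) auto
  qed
  have e3: "integral\<^sup>L (snd w (y, z)) (F y z) = lam * integral\<^sup>L (snd p (y, z)) (F y z) + (1 - lam) * integral\<^sup>L (snd q (y, z)) (F y z)"
    if ed: "(y, z) \<in> edges r" for y z
  proof -
    obtain B where "\<forall>t. \<bar>F y z t\<bar> \<le> B" using bnd_F[OF ed] by blast
    then show ?thesis by (intro conv_comp[OF cs lam cp(2) cq(2) meas_F[OF ed]]) auto
  qed
  have e4: "integral\<^sup>L (fst w y) (gg y) = lam * integral\<^sup>L (fst p y) (gg y) + (1 - lam) * integral\<^sup>L (fst q y) (gg y)" for y
  proof -
    obtain B where "\<forall>t. \<bar>gg y t\<bar> \<le> B" using bnd_gg by blast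
    then show ?thesis by (intro conv_comp[OF cf lam cp(1) cq(1) gg_meas]) auto
  qed
  show "G4 (fst w) = lam * G4 (fst p) + (1 - lam) * G4 (fst q)"
    unfolding G4_def e4 by (rule sum_conv)
  have s1: "(\<Sum>y\<in>UNIV. \<integral>t. deriv (\<phi> y) t \<partial>(fst w y)) = lam * (\<Sum>y\<in>UNIV. \<integral>t. deriv (\<phi> y) t \<partial>(fst p y)) + (1 - lam) * (\<Sum>y\<in>UNIV. \<integral>t. deriv (\<phi> y) t \<partial>(fst q y))"
    using e1 sum_conv by simp
  have s2: "(\<Sum>y\<in>UNIV. \<Sum>z\<in>UNIV. (\<integral>s. \<phi> y s \<partial>(snd w (y, z))) - (\<integral>s. \<phi> y s \<partial>(snd w (z, y))))
     = lam * (\<Sum>y\<in>UNIV. \<Sum>z\<in>UNIV. (\<integral>s. \<phi> y s \<partial>(snd p (y, z))) - (\<integral>s. \<phi> y s \<partial>(snd p (z, y))))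
       + (1 - lam) * (\<Sum>y\<in>UNIV. \<Sum>z\<in>UNIV. (\<integral>s. \<phi> y s \<partial>(snd q (y, z))) - (\<integral>s. \<phi> y s \<partial>(snd q (z, y))))" (is "_ = ?R")
  proof -
    have "(\<Sum>y\<in>UNIV. \<Sum>z\<in>UNIV. (\<integral>s. \<phi> y s \<partial>(snd w (y, z))) - (\<integral>s. \<phi> y s \<partial>(snd w (z, y))))
      = (\<Sum>y\<in>UNIV. \<Sum>z\<in>UNIV. lam * ((\<integral>s. \<phi> y s \<partial>(snd p (y, z))) - (\<integral>s. \<phi> y s \<partial>(snd p (z, y))))
          + (1 - lam) * ((\<integral>s. \<phi> y s \<partial>(snd q (y, z))) - (\<integral>s. \<phi> y s \<partial>(snd q (z, y)))))"
      unfolding e2 by (intro sum.cong refl) (simp add: algebra_simps)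
    also have "\<dots> = (\<Sum>y\<in>UNIV. lam * (\<Sum>z\<in>UNIV. (\<integral>s. \<phi> y s \<partial>(snd p (y, z))) - (\<integral>s. \<phi> y s \<partial>(snd p (z, y))))
          + (1 - lam) * (\<Sum>z\<in>UNIV. (\<integral>s. \<phi> y s \<partial>(snd q (y, z))) - (\<integral>s. \<phi> y s \<partial>(snd q (z, y)))))"
      by (intro sum.cong refl sum_conv)
    also have "\<dots> = ?R" by (rule sum_conv)
    finally show ?thesis .
  qed
  have s3: "(\<Sum>(y, z)\<in>edges r. \<integral>t. F y z t \<partial>(snd w (y, z))) = lam * (\<Sum>(y, z)\<in>edges r. \<integral>t. F y z t \<partial>(snd p (y, z))) + (1 - lam) * (\<Sum>(y, z)\<in>edges r. \<integral>t. F y z t \<partial>(snd q (y, z)))" (is "_ = ?R")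
  proof -
    have "(\<Sum>(y, z)\<in>edges r. \<integral>t. F y z t \<partial>(snd w (y, z))) = (\<Sum>(y, z)\<in>edges r. lam * (\<integral>t. F y z t \<partial>(snd p (y, z))) + (1 - lam) * (\<integral>t. F y z t \<partial>(snd q (y, z))))"
      by (intro sum.cong refl) (use e3 in auto)
    also have "\<dots> = ?R" unfolding case_prod_beta by (rule sum_conv)
    finally show ?thesis .
  qed
  show "Lin (fst w) (snd w) = lam * Lin (fst p) (snd p) + (1 - lam) * Lin (fst q) (snd q)"
    unfolding Lin_def s1 s2 s3 by (simp add: algebra_simps)
qed

end

lemma tac_conv:
  fixes p q w :: "('v::finite \<Rightarrow> real measure) \<times> ('v \<times> 'v \<Rightarrow> real measure)"
  assumes p: "p \<in> Mstar T E" and q: "q \<in> Mstar T E"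
    and cc: "convex_comb_pair lam p q w" and lam: "0 \<le> lam" "lam \<le> 1"
    and tp: "time_abs_cont T (fst p)" and tq: "time_abs_cont T (fst q)"
  shows "time_abs_cont T (fst w)"
proof -
  note cp = Mstar_props[OF p] and cq = Mstar_props[OF q]
  obtain dp where dp: "\<And>y. dp y \<in> borel_measurable borel" "\<And>y t. 0 \<le> dp y t"
      "\<And>y. fst p y = density lborel (\<lambda>t. ennreal (dp y t))"
    and aep: "AE t in lborel. (\<Sum>y\<in>UNIV. dp y t) = indicator {0..<T} t"
    using tac_real[OF cp(1) tp] by blast
  obtain dq where dq: "\<And>y. dq y \<in> borel_measurable borel" "\<And>y t. 0 \<le> dq y t"
      "\<And>y. fst q y = density lborel (\<lambda>t. ennreal (dq y t))"
    and aeq: "AE t in lborel. (\<Sum>y\<in>UNIV. dq y t) = indicator {0..<T} t"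
    using tac_real[OF cq(1) tq] by blast
  define d where "d y t = lam * dp y t + (1 - lam) * dq y t" for y t
  have dm: "d y \<in> borel_measurable borel" for y unfolding d_def using dp(1) dq(1) by simp
  have dn: "0 \<le> d y t" for y t unfolding d_def using dp(2) dq(2) lam by simp
  have cf: "convex_comb_meas lam (fst p y) (fst q y) (fst w y)" for y using cc unfolding convex_comb_pair_def by auto
  have weq: "fst w y = density lborel (\<lambda>t. ennreal (d y t))" for y
  proof (rule measure_eqI)
    show "sets (fst w y) = sets (density lborel (\<lambda>t. ennreal (d y t)))"
      using cf[of y] unfolding convex_comb_meas_def by simp
    fix A assume "A \<in> sets (fst w y)"
    then have A: "A \<in> sets borel" using cf[of y] unfolding convex_comb_meas_def by simp
    have mp: "(\<lambda>t. ennreal (dp y t) * indicator A t) \<in> borel_measurable lborel" using dp(1) A by simp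
    have mq: "(\<lambda>t. ennreal (dq y t) * indicator A t) \<in> borel_measurable lborel" using dq(1) A by simp
    have "emeasure (density lborel (\<lambda>t. ennreal (d y t))) A = (\<integral>\<^sup>+ t. ennreal (d y t) * indicator A t \<partial>lborel)"
      using A dm by (subst emeasure_density) auto
    also have "\<dots> = (\<integral>\<^sup>+ t. ennreal lam * (ennreal (dp y t) * indicator A t) + ennreal (1 - lam) * (ennreal (dq y t) * indicator A t) \<partial>lborel)"
      by (intro nn_integral_cong) (use lam dp(2) dq(2) in \<open>simp add: d_def ennreal_mult distrib_right mult.assoc\<close>)
    also have "\<dots> = ennreal lam * (\<integral>\<^sup>+ t. ennreal (dp y t) * indicator A t \<partial>lborel) + ennreal (1 - lam) * (\<integral>\<^sup>+ t. ennreal (dq y t) * indicator A t \<partial>lborel)"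
      using mp mq by (simp add: nn_integral_add nn_integral_cmult)
    also have "\<dots> = ennreal lam * emeasure (fst p y) A + ennreal (1 - lam) * emeasure (fst q y) A"
      using A dp(1) dq(1) by (simp add: dp(3) dq(3) emeasure_density)
    also have "\<dots> = emeasure (fst w y) A" using cf[of y] A unfolding convex_comb_meas_def by simp
    finally show "emeasure (fst w y) A = emeasure (density lborel (\<lambda>t. ennreal (d y t))) A" by simp
  qed
  have ae: "AE t in lborel. (\<Sum>y\<in>UNIV. d y t) = indicator {0..<T} t"
    using aep aeq
  proof eventually_elim
    case (elim t)
    have "(\<Sum>y\<in>UNIV. d y t) = lam * (\<Sum>y\<in>UNIV. dp y t) + (1 - lam) * (\<Sum>y\<in>UNIV. dq y t)"
      unfolding d_def by (rule sum_conv)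
    also have "\<dots> = indicator {0..<T} t" using elim by (simp add: algebra_simps)
    finally show ?case .
  qed
  show ?thesis by (rule tac_intro[OF dm dn weq ae])
qed

context setting
begin

lemma convex_part:
  "\<forall>p\<in>Mstar T0 (edges r). \<forall>q\<in>Mstar T0 (edges r). \<forall>w\<in>Mstar T0 (edges r).
            \<forall>lam\<in>{0<..<1::real}. convex_comb_pair lam p q w \<longrightarrow>
              Ifun T0 r \<phi> F w \<le> ereal lam * Ifun T0 r \<phi> F p + ereal (1 - lam) * Ifun T0 r \<phi> F q"
proof (intro ballI impI)
  fix p q w lam
  assume p: "p \<in> Mstar T0 (edges r)" and q: "q \<in> Mstar T0 (edges r)" and w: "w \<in> Mstar T0 (edges r)"
    and lam: "lam \<in> {0<..<1::real}" and cc: "convex_comb_pair lam p q w"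
  have l0: "0 < lam" "lam < 1" using lam by auto
  show "Ifun T0 r \<phi> F w \<le> ereal lam * Ifun T0 r \<phi> F p + ereal (1 - lam) * Ifun T0 r \<phi> F q"
  proof (cases "time_abs_cont T0 (fst p) \<and> time_abs_cont T0 (fst q)")
    case True
    have tw: "time_abs_cont T0 (fst w)" using tac_conv[OF p q cc] l0 True by auto
    have "Ihat T0 r \<phi> F (fst w) (snd w) = lam * Ihat T0 r \<phi> F (fst p) (snd p) + (1 - lam) * Ihat T0 r \<phi> F (fst q) (snd q)"
      unfolding Ihat_split using convex_lin[OF p q cc] l0 by (simp add: algebra_simps)
    then show ?thesis using True tw unfolding Ifun_def by simp
  next
    case False
    have inf: "ereal lam * Ifun T0 r \<phi> F p + ereal (1 - lam) * Ifun T0 r \<phi> F q = \<infinity>"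
    proof -
      have "Ifun T0 r \<phi> F p = \<infinity> \<or> Ifun T0 r \<phi> F q = \<infinity>" using False unfolding Ifun_def by auto
      moreover have "Ifun T0 r \<phi> F p \<noteq> - \<infinity>" "Ifun T0 r \<phi> F q \<noteq> - \<infinity>" unfolding Ifun_def by auto
      ultimately show ?thesis using l0
        by (cases "Ifun T0 r \<phi> F p"; cases "Ifun T0 r \<phi> F q") auto
    qed
    show ?thesis unfolding inf by simp
  qed
qed

end

lemma weak_open_sub: "openin (weak_top T E) N \<Longrightarrow> N \<subseteq> Mstar T E"
  using openin_subset weak_topspace by metis

lemma sep_nontac:
  fixes p :: "('v::finite \<Rightarrow> real measure) \<times> ('v \<times> 'v \<Rightarrow> real measure)"
  assumes T: "T > 0" and p: "p \<in> Mstar T E" and nt: "\<not> time_abs_cont T (fst p)"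
  shows "\<exists>a n. 0 \<le> a \<and> a < T \<and> (\<Sum>y\<in>UNIV. integral\<^sup>L (fst p y) (fc T a n)) \<noteq> integral\<^sup>L (lamT T) (fc T a n)"
  using L_closed[OF T Mstar_props(1)[OF p] Mstar_props(3)[OF p]] nt by blast

lemma tac_sum:
  fixes q :: "('v::finite \<Rightarrow> real measure) \<times> ('v \<times> 'v \<Rightarrow> real measure)" and f :: "real \<Rightarrow> real"
  assumes q: "q \<in> Mstar T E" and tq: "time_abs_cont T (fst q)"
    and f: "f \<in> borel_measurable borel" and B: "\<And>t. \<bar>f t\<bar> \<le> B"
  shows "(\<Sum>y\<in>UNIV. integral\<^sup>L (fst q y) f) = integral\<^sup>L (lamT T) f"
proof -
  obtain d where d: "\<And>y. d y \<in> borel_measurable borel" "\<And>y t. 0 \<le> d y t"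
      "\<And>y. fst q y = density lborel (\<lambda>t. ennreal (d y t))"
    and ae: "AE t in lborel. (\<Sum>y\<in>UNIV. d y t) = indicator {0..<T} t"
    using tac_real[OF Mstar_props(1)[OF q] tq] by blast
  show ?thesis by (rule Lsum_dens[OF Mstar_props(1)[OF q] d ae f B])
qed

context setting
begin

lemma wcont_Lin: "wcont T0 (edges r) (\<lambda>q. Lin (fst q) (snd q))"
proof -
  have w1: "wcont T0 (edges r) (\<lambda>q. \<Sum>y\<in>UNIV. \<integral>t. deriv (\<phi> y) t \<partial>(fst q y))"
    by (intro wcont_sum wcont_int1 phi_props) auto
  have w2: "wcont T0 (edges r) (\<lambda>q. \<Sum>y\<in>UNIV. \<Sum>z\<in>UNIV. (\<integral>s. \<phi> y s \<partial>(snd q (y, z))) - (\<integral>s. \<phi> y s \<partial>(snd q (z, y))))"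
    by (intro wcont_sum wcont_diff wcont_int2 phi_props phi_periodic) auto
  have w3: "wcont T0 (edges r) (\<lambda>q. \<Sum>e\<in>edges r. \<integral>t. F (fst e) (snd e) t \<partial>(snd q e))"
  proof (rule wcont_sum)
    fix e assume e: "e \<in> edges r"
    show "wcont T0 (edges r) (\<lambda>q. \<integral>t. F (fst e) (snd e) t \<partial>(snd q e))"
      by (rule wcont_int2) (use e F_cont F_periodic in auto)
  qed simp
  have "wcont T0 (edges r) (\<lambda>q. - (\<Sum>y\<in>UNIV. \<integral>t. deriv (\<phi> y) t \<partial>(fst q y))
     + (\<Sum>y\<in>UNIV. \<Sum>z\<in>UNIV. (\<integral>s. \<phi> y s \<partial>(snd q (y, z))) - (\<integral>s. \<phi> y s \<partial>(snd q (z, y))))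
     + (\<Sum>e\<in>edges r. \<integral>t. F (fst e) (snd e) t \<partial>(snd q e)))"
    by (intro wcont_add wcont_neg w1 w2 w3)
  then show ?thesis unfolding Lin_def case_prod_beta prod.collapse .
qed

lemma lsc_part: "\<forall>c::real. openin (weak_top T0 (edges r)) {p\<in>Mstar T0 (edges r). ereal c < Ifun T0 r \<phi> F p}"
proof
  fix c :: real
  let ?M = "Mstar T0 (edges r)" and ?W = "weak_top T0 (edges r)"
  let ?O = "{p\<in>?M. ereal c < Ifun T0 r \<phi> F p}"
  show "openin ?W ?O"
    unfolding openin_subopen[of ?W ?O]
  proof
    fix p assume pO: "p \<in> ?O"
    then have p: "p \<in> ?M" by simp
    show "\<exists>N. openin ?W N \<and> p \<in> N \<and> N \<subseteq> ?O"
    proof (cases "time_abs_cont T0 (fst p)")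
      case False
      obtain a n where a: "0 \<le> a" "a < T0"
        and ne: "(\<Sum>y\<in>UNIV. integral\<^sup>L (fst p y) (fc T0 a n)) \<noteq> integral\<^sup>L (lamT T0) (fc T0 a n)"
        using sep_nontac[OF T0_pos p False] by blast
      let ?\<Phi> = "\<lambda>q. \<Sum>y\<in>UNIV. integral\<^sup>L (fst q y) (fc T0 a n)"
      have wc: "wcont T0 (edges r) ?\<Phi>"
        by (intro wcont_sum wcont_int1 fc_cont fc_per a) auto
      define D where "D = \<bar>?\<Phi> p - integral\<^sup>L (lamT T0) (fc T0 a n)\<bar>"
      have D: "D > 0" using ne unfolding D_def by simp
      obtain N where N: "openin ?W N" "p \<in> N" "\<And>q. q \<in> N \<Longrightarrow> \<bar>?\<Phi> q - ?\<Phi> p\<bar> < D"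
        using wcontD[OF wc p D] by blast
      have "N \<subseteq> ?O"
      proof
        fix q assume qN: "q \<in> N"
        then have q: "q \<in> ?M" using weak_open_sub[OF N(1)] by auto
        have "\<not> time_abs_cont T0 (fst q)"
        proof
          assume tq: "time_abs_cont T0 (fst q)"
          have "?\<Phi> q = integral\<^sup>L (lamT T0) (fc T0 a n)"
            by (rule tac_sum[OF q tq fc_meas, where B=1]) (use fc_bound in \<open>auto simp: abs_le_iff\<close>)
          then show False using N(3)[OF qN] unfolding D_def by (simp add: abs_minus_commute)
        qed
        then show "q \<in> ?O" using q unfolding Ifun_def by simp
      qed
      then show ?thesis using N by blast
    next
      case True
      have Ip: "c < Ihat T0 r \<phi> F (fst p) (snd p)" using pO True unfolding Ifun_def by simp
      define \<epsilon> where "\<epsilon> = Ihat T0 r \<phi> F (fst p) (snd p) - c"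
      have e: "\<epsilon> > 0" using Ip unfolding \<epsilon>_def by simp
      define K where "K = real CARD('v)"
      have K: "K \<ge> 1" unfolding K_def by simp
      obtain G where G: "\<And>y t. \<bar>gg y t\<bar> \<le> G" using gg_bound by blast
      define e' where "e' = \<epsilon> / (4 * K)"
      have e': "e' > 0" unfolding e'_def using e K by simp
      have "\<forall>y. \<exists>h. continuous_on UNIV h \<and> periodic_fun T0 h \<and> (\<forall>t. gg y t \<le> h t) \<and> (\<forall>t. \<bar>h t\<bar> \<le> G)
            \<and> integral\<^sup>L (lamT T0) (\<lambda>t. h t - gg y t) < e'"
        using approx_upper[OF T0_pos gg_meas G gg_per gg_cont_ae e'] by blast
      then obtain h where h: "\<And>y. continuous_on UNIV (h y)" "\<And>y. periodic_fun T0 (h y)"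
        "\<And>y t. gg y t \<le> h y t" "\<And>y t. \<bar>h y t\<bar> \<le> G"
        "\<And>y. integral\<^sup>L (lamT T0) (\<lambda>t. h y t - gg y t) < e'"
        by metis
      let ?\<Phi> = "\<lambda>q. \<Sum>y\<in>UNIV. integral\<^sup>L (fst q y) (h y)"
      have hm: "h y \<in> borel_measurable borel" for y by (rule borel_measurable_continuous_onI[OF h(1)])
      have wc: "wcont T0 (edges r) ?\<Phi>"
        by (intro wcont_sum wcont_int1 h) auto
      obtain N1 where N1: "openin ?W N1" "p \<in> N1" "\<And>q. q \<in> N1 \<Longrightarrow> \<bar>Lin (fst q) (snd q) - Lin (fst p) (snd p)\<bar> < \<epsilon> / 2"
        using wcontD[OF wcont_Lin p, of "\<epsilon> / 2"] e by auto
      obtain N2 where N2: "openin ?W N2" "p \<in> N2" "\<And>q. q \<in> N2 \<Longrightarrow> \<bar>?\<Phi> q - ?\<Phi> p\<bar> < \<epsilon> / 4"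
        using wcontD[OF wc p, of "\<epsilon> / 4"] e by auto
      have G4p: "?\<Phi> p < G4 (fst p) + \<epsilon> / 4"
      proof -
        obtain d where d: "\<And>y. d y \<in> borel_measurable borel" "\<And>y t. 0 \<le> d y t"
            "\<And>y. fst p y = density lborel (\<lambda>t. ennreal (d y t))"
          and ae: "AE t in lborel. (\<Sum>y\<in>UNIV. d y t) = indicator {0..<T0} t"
          using tac_real[OF Mstar_props(1)[OF p] True] by blast
        have "integral\<^sup>L (fst p y) (h y) - integral\<^sup>L (fst p y) (gg y) < e'" for y
        proof -
          have i1: "integrable (fst p y) (h y)" using integrable_circ_glob[OF Mstar_props(1)[OF p] hm h(4)] .
          have i2: "integrable (fst p y) (gg y)" using integrable_circ_glob[OF Mstar_props(1)[OF p] gg_meas G] .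
          have "integral\<^sup>L (fst p y) (h y) - integral\<^sup>L (fst p y) (gg y) = integral\<^sup>L (fst p y) (\<lambda>t. h y t - gg y t)"
            using i1 i2 by simp
          also have "\<dots> \<le> integral\<^sup>L (lamT T0) (\<lambda>t. h y t - gg y t)"
          proof (rule dens_le_lamT[OF Mstar_props(1)[OF p] T0_pos d ae])
            show "(\<lambda>t. h y t - gg y t) \<in> borel_measurable borel" using hm gg_meas by simp
            show "\<And>t. 0 \<le> h y t - gg y t" using h(3) by simp
            show "\<And>t. h y t - gg y t \<le> 2 * G" using h(4) G by (simp add: abs_le_iff) (smt (verit))
          qed
          also have "\<dots> < e'" by (rule h(5))
          finally show ?thesis .
        qed
        then have "(\<Sum>y\<in>UNIV. integral\<^sup>L (fst p y) (h y) - integral\<^sup>L (fst p y) (gg y)) < (\<Sum>y\<in>(UNIV::'v set). e')"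
          by (intro sum_strict_mono) auto
        also have "\<dots> = \<epsilon> / 4" unfolding e'_def K_def using K unfolding K_def by simp
        finally show ?thesis unfolding G4_def sum_subtractf by simp
      qed
      have "N1 \<inter> N2 \<subseteq> ?O"
      proof
        fix q assume qN: "q \<in> N1 \<inter> N2"
        then have q: "q \<in> ?M" using weak_open_sub[OF N1(1)] by auto
        show "q \<in> ?O"
        proof (cases "time_abs_cont T0 (fst q)")
          case False then show ?thesis using q unfolding Ifun_def by simp
        next
          case tq: True
          have "G4 (fst q) \<le> ?\<Phi> q"
            unfolding G4_def
          proof (rule sum_mono)
            fix y
            show "integral\<^sup>L (fst q y) (gg y) \<le> integral\<^sup>L (fst q y) (h y)"
              by (rule integral_mono[OF integrable_circ_glob[OF Mstar_props(1)[OF q] gg_meas G]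
                    integrable_circ_glob[OF Mstar_props(1)[OF q] hm h(4)]]) (use h(3) in auto)
          qed
          moreover have "q \<in> N2" using qN by simp
          then have "\<bar>?\<Phi> q - ?\<Phi> p\<bar> < \<epsilon> / 4" by (rule N2(3))
          ultimately have g4: "G4 (fst q) < G4 (fst p) + \<epsilon> / 2" using G4p unfolding abs_less_iff by linarith
          have "q \<in> N1" using qN by simp
          then have "\<bar>Lin (fst q) (snd q) - Lin (fst p) (snd p)\<bar> < \<epsilon> / 2" by (rule N1(3))
          then have l: "Lin (fst q) (snd q) > Lin (fst p) (snd p) - \<epsilon> / 2" unfolding abs_less_iff by linarith
          have A: "Lin (fst q) (snd q) - G4 (fst q) > (Lin (fst p) (snd p) - G4 (fst p)) - \<epsilon>"
            using g4 l by linarith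
          have B: "Lin (fst p) (snd p) - G4 (fst p) - \<epsilon> = c"
            unfolding \<epsilon>_def Ihat_split by simp
          have "c < Ihat T0 r \<phi> F (fst q) (snd q)"
            unfolding Ihat_split using A B by linarith
          then show ?thesis using q tq unfolding Ifun_def by simp
        qed
      qed
      then show ?thesis using N1 N2 by blast
    qed
  qed
qed

end

theorem lemma8p2:
  fixes T0 :: real
    and r :: "'v::finite \<Rightarrow> 'v \<Rightarrow> real \<Rightarrow> real"
    and \<phi> :: "'v \<Rightarrow> real \<Rightarrow> real"
    and F :: "'v \<Rightarrow> 'v \<Rightarrow> real \<Rightarrow> real"
  assumes T0_pos: "T0 > 0"
    and r_nonneg: "\<And>y z t. r y z t \<ge> 0"
    and r_meas: "\<And>y z. r y z \<in> borel_measurable borel"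
    and r_periodic: "\<And>y z. periodic_fun T0 (r y z)"
    and r_diag: "\<And>x t. r x x t = 0"
    and A1: "\<And>y z. (\<exists>t>0. r y z t > 0) \<Longrightarrow> (\<forall>t>0. r y z t > 0)"
    and A2: "\<And>y z. (y, z) \<in> (edges r)\<^sup>*"
    and A3_upper: "\<exists>C. \<forall>(y, z)\<in>edges r. \<forall>t\<in>{0..T0}. r y z t \<le> C"
    and A3_lower: "\<exists>c>0. \<forall>(y, z)\<in>edges r. \<forall>t\<in>{0..T0}. c \<le> r y z t"
    and A4: "{t\<in>{0..<T0}. \<exists>y z. \<not> isCont (r y z) t} \<in> null_sets lborel"
    and phi_periodic: "\<And>y. periodic_fun T0 (\<phi> y)"
    and phi_C1: "\<And>y. \<exists>\<phi>'. (\<forall>t. (\<phi> y has_real_derivative \<phi>' t) (at t)) \<and> continuous_on UNIV \<phi>'"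
    and F_periodic: "\<And>y z. (y, z) \<in> edges r \<Longrightarrow> periodic_fun T0 (F y z)"
    and F_cont: "\<And>y z. (y, z) \<in> edges r \<Longrightarrow> continuous_on UNIV (F y z)"
  shows "(\<forall>p\<in>Mstar T0 (edges r). \<forall>q\<in>Mstar T0 (edges r). \<forall>w\<in>Mstar T0 (edges r).
            \<forall>lam\<in>{0<..<1::real}. convex_comb_pair lam p q w \<longrightarrow>
              Ifun T0 r \<phi> F w \<le> ereal lam * Ifun T0 r \<phi> F p + ereal (1 - lam) * Ifun T0 r \<phi> F q)
       \<and> (\<forall>c::real. openin (weak_top T0 (edges r)) {p\<in>Mstar T0 (edges r). ereal c < Ifun T0 r \<phi> F p})"
proof -
  interpret S: setting T0 r \<phi> F
    by (rule setting.intro) (fact T0_pos r_nonneg r_meas r_periodic r_diag A1 A3_upper A4 phi_periodic phi_C1 F_periodic F_cont)+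
  show ?thesis by (intro conjI S.convex_part S.lsc_part)
qed

end
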